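(* Assume (A1)–(A4) from the context. Let $0<\alpha<1/\rho$ (with $1/\rho=+\infty$ if $\rho=0$), and let $\beta>0$ satisfy $24K(K-1)L^2\beta^2\le1$. Set $\delta=1/(1-\alpha\rho)^2$. Then for every $t\ge0$ the iterates generated by FedCanon satisfy $$\begin{aligned}\mathbb{E}[\phi(z^{t+1})-\phi(z^t)]\le&-\frac{\alpha-2(\rho+L)\alpha^2}{4}\mathbb{E}\Vert G^\alpha(z^t,\bar\Delta^{t+1})\Vert^2-\frac\alpha8\mathbb{E}\Vert G^\alpha(z^t)\Vert^2\\&-\left[\frac{\alpha}{16}-12(2+\delta)\alpha\beta^2K^2L^2\right]\mathbb{E}\Vert\nabla f(z^t)\Vert^2+\frac{\alpha B_h}{8}\\&+12(2+\delta)\alpha\beta^2K^2L^2\,\mathcal{E}^t+\frac{\alpha(2+\delta)(1+3\beta^2K^3L^2)\sigma^2}{BK}.\end{aligned}$$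
   Context: Let $N,d,K,B$ be positive integers and $[N]=\{1,\dots,N\}$. For each $i\in[N]$ let $f_i(x)=\mathbb{E}_{\xi\sim\mathcal{D}_i}[F_i(x;\xi)]$. Let $f=\frac1N\sum_if_i$, let $h:\mathbb{R}^d\to\mathbb{R}\cup\{+\infty\}$, and let $\phi=f+h$. Standing assumptions: (A1) $\phi^*:=\inf\phi>-\infty$. (A2) There is $L>0$ such that for every $i$ and all $x,y$: $f_i(x)-f_i(y)-\langle\nabla f_i(y),x-y\rangle\le\frac L2\Vert x-y\Vert^2$ and $\Vert\nabla f_i(x)-\nabla f_i(y)\Vert\le L\Vert x-y\Vert$. (A3) $h$ is proper, closed and $\rho$-weakly convex for some $\rho\ge0$ ($h+\frac\rho2\Vert\cdot\Vert^2$ convex). There is $B_h$ with $\Vert h'(z)\Vert^2\le B_h$ for every $z$ and every $h'(z)\in\partial h(z)$. (A4) Each evaluation $g_i(x)=\frac1B\sum_{b=1}^B\nabla F_i(x;\xi_{i,b})$ uses $B$ fresh samples from $\mathcal{D}_i$, independent of the past. Conditionally on the past, $\mathbb{E}[g_i(x)]=\nabla f_i(x)$ and $\mathbb{E}\Vert g_i(x)-\nabla f_i(x)\Vert^2\le\sigma^2/B$. $\mathbf{prox}_{\alpha h}\{y\}=\arg\min_x\{h(x)+\frac1{2\alpha}\Vert x-y\Vert^2\}$. Algorithm FedCanon. The inputs are $\alpha,\beta>0$, an initial point $z^0$, and $c_i^0$ with $\sum_ic_i^0=\mathbf{0}_d$. For $t=0,1,\dots$: - set $\hat x_i^{t,0}=z^t$;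 - update $\hat x_i^{t,k+1}=\hat x_i^{t,k}-\beta[g_i(\hat x_i^{t,k})+c_i^t]$ for $k=0,\dots,K-1$; - form $\Delta_i^{t+1}=\frac1{\beta K}(z^t-\hat x_i^{t,K})$ and $\bar\Delta^{t+1}=\frac1N\sum_i\Delta_i^{t+1}$; - set $z^{t+1}=\mathbf{prox}_{\alpha h}\{z^t-\alpha\bar\Delta^{t+1}\}$; - update $c_i^{t+1}=c_i^t+\bar\Delta^{t+1}-\Delta_i^{t+1}$. Notation: - $G^\alpha(z,u)=\frac1\alpha(z-\mathbf{prox}_{\alpha h}\{z-\alpha u\})$ and $G^\alpha(z)=G^\alpha(z,\nabla f(z))$. - $v_i^t=\frac1K\sum_{k=0}^{K-1}g_i(\hat x_i^{t,k})$ and $\bar v^t=\frac1N\sum_iv_i^t$. - $\mathcal{E}^t=\frac1N\sum_i\mathbb{E}\Vert\nabla f_i(z^t)+c_i^t-\nabla f(z^t)\Vert^2$. For $t\ge1$ this equals $\frac1N\sum_i\mathbb{E}\Vert\nabla f_i(\hat x_i^{t,0})-v_i^{t-1}-\nabla f(z^t)+\bar v^{t-1}\Vert^2$. - $\mathbb{E}$ is expectation over all sampling. *)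

theory Defs
  imports "HOL-Probability.Probability"
begin

text \<open>Proximal operator: the (unique, when 0 < alpha < 1/rho) minimiser of
  h x + 1/(2 alpha) norm (x - y)^2.\<close>
definition prox :: "real \<Rightarrow> ('a::real_normed_vector \<Rightarrow> real) \<Rightarrow> 'a \<Rightarrow> 'a" where
  "prox \<alpha> h y = (SOME x. \<forall>w. h x + (norm (x - y))\<^sup>2 / (2 * \<alpha>) \<le> h w + (norm (w - y))\<^sup>2 / (2 * \<alpha>))"

definition Gmap :: "real \<Rightarrow> ('a::real_normed_vector \<Rightarrow> real) \<Rightarrow> 'a \<Rightarrow> 'a \<Rightarrow> 'a" where
  "Gmap \<alpha> h z u = (1 / \<alpha>) *\<^sub>R (z - prox \<alpha> h (z - \<alpha> *\<^sub>R u))"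

definition frechet_subdiff :: "('a::real_inner \<Rightarrow> real) \<Rightarrow> 'a \<Rightarrow> 'a set" where
  "frechet_subdiff h z = {v. \<forall>e>0. eventually (\<lambda>y. h y \<ge> h z + v \<bullet> (y - z) - e * norm (y - z)) (at z)}"

definition sgrad :: "(nat \<Rightarrow> 'a::real_vector \<Rightarrow> 'b \<Rightarrow> 'a) \<Rightarrow> nat \<Rightarrow> nat \<Rightarrow> 'a \<Rightarrow> (nat \<Rightarrow> 'b) \<Rightarrow> 'a" where
  "sgrad gF B i x s = (1 / real B) *\<^sub>R (\<Sum>b<B. gF i x (s b))"

text \<open>Local iterates hat x_i^{t,k}; s k b is the b-th sample used at local step k.\<close>
primrec local_pt :: "(nat \<Rightarrow> 'a::real_vector \<Rightarrow> 'b \<Rightarrow> 'a) \<Rightarrow> nat \<Rightarrow> real \<Rightarrow> 'a \<Rightarrow> nat \<Rightarrow> 'a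
    \<Rightarrow> (nat \<Rightarrow> nat \<Rightarrow> 'b) \<Rightarrow> nat \<Rightarrow> 'a" where
  "local_pt gF B \<beta> c i z s 0 = z"
| "local_pt gF B \<beta> c i z s (Suc k) =
     local_pt gF B \<beta> c i z s k - \<beta> *\<^sub>R (sgrad gF B i (local_pt gF B \<beta> c i z s k) (s k) + c)"

definition fc_delta :: "(nat \<Rightarrow> 'a::real_vector \<Rightarrow> 'b \<Rightarrow> 'a) \<Rightarrow> nat \<Rightarrow> real \<Rightarrow> nat \<Rightarrow> 'a \<Rightarrow> nat \<Rightarrow> 'a
    \<Rightarrow> (nat \<Rightarrow> nat \<Rightarrow> 'b) \<Rightarrow> 'a" where
  "fc_delta gF B \<beta> K c i z s = (1 / (\<beta> * real K)) *\<^sub>R (z - local_pt gF B \<beta> c i z s K)"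

text \<open>bar Delta^{t+1}, from the state (z^t, c^t) and the round-t samples st i k b.\<close>
definition fc_Dbar :: "(nat \<Rightarrow> 'a::real_vector \<Rightarrow> 'b \<Rightarrow> 'a) \<Rightarrow> nat \<Rightarrow> real \<Rightarrow> nat \<Rightarrow> nat
    \<Rightarrow> 'a \<times> (nat \<Rightarrow> 'a) \<Rightarrow> (nat \<Rightarrow> nat \<Rightarrow> nat \<Rightarrow> 'b) \<Rightarrow> 'a" where
  "fc_Dbar gF B \<beta> K N st smp =
     (1 / real N) *\<^sub>R (\<Sum>i<N. fc_delta gF B \<beta> K (snd st i) i (fst st) (smp i))"

text \<open>FedCanon state (z^t, c^t); xi t i k b is the b-th sample of client i at local step k of round t.\<close>
primrec fedcanon :: "(nat \<Rightarrow> 'a::real_normed_vector \<Rightarrow> 'b \<Rightarrow> 'a) \<Rightarrow> nat \<Rightarrow> real \<Rightarrow> real \<Rightarrow> nat \<Rightarrow> nat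
    \<Rightarrow> ('a \<Rightarrow> real) \<Rightarrow> 'a \<Rightarrow> (nat \<Rightarrow> 'a) \<Rightarrow> (nat \<Rightarrow> nat \<Rightarrow> nat \<Rightarrow> nat \<Rightarrow> 'b) \<Rightarrow> nat
    \<Rightarrow> 'a \<times> (nat \<Rightarrow> 'a)" where
  "fedcanon gF B \<alpha> \<beta> K N h z0 c0 \<xi> 0 = (z0, c0)"
| "fedcanon gF B \<alpha> \<beta> K N h z0 c0 \<xi> (Suc t) =
     (let st = fedcanon gF B \<alpha> \<beta> K N h z0 c0 \<xi> t;
          z = fst st; c = snd st;
          Db = fc_Dbar gF B \<beta> K N st (\<xi> t)
      in (prox \<alpha> h (z - \<alpha> *\<^sub>R Db),
          \<lambda>i. c i + Db - fc_delta gF B \<beta> K (c i) i z (\<xi> t i)))"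

end

theory Submission
  imports Defs "HOL-Probability.Probability"
begin

lemma norm_comb_sq:
  fixes p w y :: "'a::real_inner"
  shows "(norm ((1 - t) *\<^sub>R p + t *\<^sub>R w - y))\<^sup>2
     = (1 - t) * (norm (p - y))\<^sup>2 + t * (norm (w - y))\<^sup>2 - t * (1 - t) * (norm (w - p))\<^sup>2"
proof -
  have e: "(1 - t) *\<^sub>R p + t *\<^sub>R w - y = (1 - t) *\<^sub>R (p - y) + t *\<^sub>R (w - y)"
    by (simp add: algebra_simps)
  have e2: "w - p = (w - y) - (p - y)" by simp
  show ?thesis
    unfolding e e2 power2_norm_eq_inner
    by (simp add: inner_simps algebra_simps power2_eq_square)
qed

locale proxA =
  fixes h :: "'a::euclidean_space \<Rightarrow> real" and \<rho> \<alpha> Bh :: real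
  assumes rho: "\<rho> \<ge> 0" and alpha: "\<alpha> > 0" and arho: "\<alpha> * \<rho> < 1"
    and conv: "convex_on UNIV (\<lambda>x. h x + \<rho> / 2 * (norm x)\<^sup>2)"
    and sub: "\<forall>z. \<forall>v\<in>frechet_subdiff h z. (norm v)\<^sup>2 \<le> Bh"
begin

definition g where "g x = h x + \<rho> / 2 * (norm x)\<^sup>2"
definition psi where "psi y x = h x + (norm (x - y))\<^sup>2 / (2 * \<alpha>)"

lemma g_cont: "continuous_on UNIV g"
  unfolding g_def using convex_on_continuous[OF open_UNIV conv] .

lemma h_eq: "h x = g x - \<rho> / 2 * (norm x)\<^sup>2"
  by (simp add: g_def)

lemma h_cont: "continuous_on UNIV h"
proof -
  have "continuous_on UNIV (\<lambda>x. g x - \<rho> / 2 * (norm x)\<^sup>2)"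
    by (intro continuous_intros g_cont)
  moreover have "(\<lambda>x. g x - \<rho> / 2 * (norm x)\<^sup>2) = h" by (simp add: g_def fun_eq_iff)
  ultimately show ?thesis by metis
qed

lemma psi_cont: "continuous_on UNIV (psi y)"
  unfolding psi_def using alpha by (intro continuous_intros h_cont[THEN continuous_on_subset]) auto

lemma g_lower: "\<exists>C0 C1. C1 \<ge> 0 \<and> (\<forall>x. g x \<ge> C0 - C1 * norm x)"
proof -
  have gc: "continuous_on (cball (0::'a) 1) g" using g_cont by (rule continuous_on_subset) auto
  obtain m0 where m0: "m0 \<in> cball (0::'a) 1" "\<forall>y\<in>cball 0 1. g m0 \<le> g y"
    using continuous_attains_inf[OF compact_cball _ gc] by auto
  define m where "m = g m0"
  define C1 where "C1 = \<bar>m - g 0\<bar>"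
  have "\<forall>x. g x \<ge> (m - C1) - C1 * norm x"
  proof
    fix x :: 'a
    show "g x \<ge> (m - C1) - C1 * norm x"
    proof (cases "norm x \<le> 1")
      case True
      then have "g x \<ge> m" using m0 by (auto simp: m_def)
      moreover have "C1 * norm x \<ge> 0" by (simp add: C1_def)
      moreover have "C1 \<ge> 0" by (simp add: C1_def)
      ultimately show ?thesis by linarith
    next
      case False
      define l where "l = 1 / norm x"
      have l: "0 < l" "l < 1" using False by (auto simp: l_def divide_less_eq)
      have u: "l *\<^sub>R x \<in> cball 0 1" using False by (simp add: l_def)
      have "g (l *\<^sub>R x) = g ((1 - l) *\<^sub>R 0 + l *\<^sub>R x)" by simp
      also have "\<dots> \<le> (1 - l) * g 0 + l * g x"
        using conv l unfolding g_def[abs_def]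
        by (intro convex_onD) auto
      finally have A: "g (l *\<^sub>R x) \<le> (1 - l) * g 0 + l * g x" .
      have B: "m \<le> g (l *\<^sub>R x)" using m0 u by (auto simp: m_def)
      have "m \<le> (1 - l) * g 0 + l * g x" using A B by linarith
      then have "norm x * m \<le> norm x * ((1 - l) * g 0 + l * g x)"
        by (intro mult_left_mono) auto
      also have "\<dots> = (norm x - 1) * g 0 + g x"
        using False by (simp add: l_def algebra_simps)
      finally have C: "norm x * m \<le> (norm x - 1) * g 0 + g x" .
      have "(m - C1) - C1 * norm x \<le> g 0 + norm x * (m - g 0)"
      proof -
        have "g 0 \<ge> m - C1" by (simp add: C1_def)
        moreover have "norm x * (m - g 0) \<ge> - C1 * norm x"
        proof -
          have "-C1 \<le> m - g 0" by (simp add: C1_def)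
          then have "norm x * (-C1) \<le> norm x * (m - g 0)" by (rule mult_left_mono) simp
          then show ?thesis by (simp add: mult.commute)
        qed
        ultimately show ?thesis by linarith
      qed
      also have "\<dots> \<le> g x" using C by (simp add: algebra_simps)
      finally show ?thesis .
    qed
  qed
  then show ?thesis using C1_def by (intro exI[of _ "m - C1"] exI[of _ C1]) auto
qed

lemma psi_coercive: "\<exists>R. \<forall>x. norm x > R \<longrightarrow> psi y x > psi y y"
proof -
  obtain C0 C1 where C: "C1 \<ge> 0" "\<And>x. g x \<ge> C0 - C1 * norm x" using g_lower by blast
  define \<mu> where "\<mu> = (1 / \<alpha> - \<rho>) / 2"
  have mu: "\<mu> > 0" using arho alpha by (simp add: \<mu>_def field_simps)
  define C2 where "C2 = C1 + norm y / \<alpha>"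
  define R where "R = (C2 + \<bar>psi y y - C0\<bar>) / \<mu> + 1"
  have C2: "C2 \<ge> 0" using C alpha by (simp add: C2_def)
  have "\<forall>x. norm x > R \<longrightarrow> psi y x > psi y y"
  proof (intro allI impI)
    fix x :: 'a
    assume xR: "norm x > R"
    define r where "r = norm x"
    have "(C2 + \<bar>psi y y - C0\<bar>) / \<mu> \<ge> 0" using mu C2 by simp
    then have r1: "r \<ge> 1" using xR unfolding R_def r_def by linarith
    have "(norm (x - y))\<^sup>2 \<ge> (r - norm y)\<^sup>2"
    proof -
      have "\<bar>r - norm y\<bar> \<le> norm (x - y)" unfolding r_def by (rule norm_triangle_ineq3)
      then show ?thesis by (metis abs_ge_zero power2_abs power_mono)
    qed
    then have "(norm (x - y))\<^sup>2 / (2 * \<alpha>) \<ge> (r - norm y)\<^sup>2 / (2 * \<alpha>)"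
      using alpha by (intro divide_right_mono) auto
    moreover have "(r - norm y)\<^sup>2 / (2 * \<alpha>) \<ge> r\<^sup>2 / (2 * \<alpha>) - r * norm y / \<alpha>"
      using alpha by (simp add: power2_diff field_simps)
    moreover have "h x = g x - \<rho> / 2 * r\<^sup>2" by (simp add: h_eq r_def)
    moreover have "g x \<ge> C0 - C1 * r" using C(2)[of x] by (simp add: r_def)
    ultimately have "psi y x \<ge> C0 - C1 * r - \<rho> / 2 * r\<^sup>2 + r\<^sup>2 / (2 * \<alpha>) - r * norm y / \<alpha>"
      unfolding psi_def by linarith
    also have "C0 - C1 * r - \<rho> / 2 * r\<^sup>2 + r\<^sup>2 / (2 * \<alpha>) - r * norm y / \<alpha> = C0 + \<mu> * r * r - C2 * r"
      using alpha by (simp add: \<mu>_def C2_def field_simps power2_eq_square)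
    finally have P: "psi y x \<ge> C0 + \<mu> * r * r - C2 * r" .
    have "\<mu> * r > \<mu> * R" using xR mu r_def by simp
    also have "\<mu> * R = C2 + \<bar>psi y y - C0\<bar> + \<mu>" using mu by (simp add: R_def field_simps)
    finally have "\<mu> * r > C2 + \<bar>psi y y - C0\<bar>" using mu by linarith
    then have "\<mu> * r * r \<ge> (C2 + \<bar>psi y y - C0\<bar>) * r" using r1
      by (intro mult_right_mono) auto
    moreover have "(C2 + \<bar>psi y y - C0\<bar>) * r \<ge> C2 * r + \<bar>psi y y - C0\<bar>"
    proof -
      have "\<bar>psi y y - C0\<bar> * 1 \<le> \<bar>psi y y - C0\<bar> * r" by (rule mult_left_mono) (use r1 in auto)
      then show ?thesis by (simp add: algebra_simps)
    qed
    moreover have "\<mu> * r * r > (C2 + \<bar>psi y y - C0\<bar>) * r"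
      using \<open>\<mu> * r > C2 + \<bar>psi y y - C0\<bar>\<close> r1 by (intro mult_strict_right_mono) auto
    ultimately have "\<mu> * r * r > C2 * r + \<bar>psi y y - C0\<bar>" by linarith
    then show "psi y x > psi y y" using P by linarith
  qed
  then show ?thesis by blast
qed

lemma psi_min_exists: "\<exists>p. \<forall>w. psi y p \<le> psi y w"
proof -
  obtain R where R: "\<And>x. norm x > R \<Longrightarrow> psi y x > psi y y" using psi_coercive by blast
  define S where "S = cball (0::'a) (max R (norm y))"
  have "y \<in> S" by (simp add: S_def)
  have pc: "continuous_on S (psi y)" using psi_cont by (rule continuous_on_subset) auto
  obtain p where p: "p \<in> S" "\<forall>w\<in>S. psi y p \<le> psi y w"
    using continuous_attains_inf[OF _ _ pc] \<open>y \<in> S\<close> by (auto simp: S_def)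
  have "\<forall>w. psi y p \<le> psi y w"
  proof
    fix w
    show "psi y p \<le> psi y w"
    proof (cases "w \<in> S")
      case True then show ?thesis using p by auto
    next
      case False
      then have "norm w > R" by (simp add: S_def)
      then have "psi y w > psi y y" by (rule R)
      then show ?thesis using p \<open>y \<in> S\<close> by force
    qed
  qed
  then show ?thesis by blast
qed

lemma prox_min: "h (prox \<alpha> h y) + (norm (prox \<alpha> h y - y))\<^sup>2 / (2 * \<alpha>) \<le> h w + (norm (w - y))\<^sup>2 / (2 * \<alpha>)"
proof -
  have "\<exists>x. \<forall>w. h x + (norm (x - y))\<^sup>2 / (2 * \<alpha>) \<le> h w + (norm (w - y))\<^sup>2 / (2 * \<alpha>)"
    using psi_min_exists[of y] unfolding psi_def .
  then show ?thesis unfolding prox_def by (rule someI_ex[THEN spec])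
qed


lemma small_gap: fixes E c :: real
  assumes "\<And>t. 0 < t \<Longrightarrow> t < 1 \<Longrightarrow> E \<le> t * c" "c \<ge> 0" shows "E \<le> 0"
proof (rule ccontr)
  assume "\<not> E \<le> 0"
  then have E: "E > 0" by simp
  define t where "t = min (1/2) (E / (2 * c + 1))"
  have t: "0 < t" "t < 1" using E assms(2) by (auto simp: t_def)
  have "t * c \<le> E / (2 * c + 1) * c" using assms(2) by (intro mult_right_mono) (auto simp: t_def)
  also have "\<dots> < E" using E assms(2) by (simp add: field_simps add_pos_nonneg)
  finally show False using assms(1)[OF t] by simp
qed

lemma prox_strong:
  "psi y (prox \<alpha> h y) + (1 / \<alpha> - \<rho>) / 2 * (norm (w - prox \<alpha> h y))\<^sup>2 \<le> psi y w"
proof -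
  define p where "p = prox \<alpha> h y"
  define \<mu> where "\<mu> = 1 / \<alpha> - \<rho>"
  have mu: "\<mu> > 0" using arho alpha by (simp add: \<mu>_def field_simps)
  have pmin: "\<And>x. psi y p \<le> psi y x" unfolding p_def psi_def by (rule prox_min)
  have key: "psi y p + \<mu> / 2 * (norm (w - p))\<^sup>2 - psi y w \<le> t * (\<mu> / 2 * (norm (w - p))\<^sup>2)"
    if t: "0 < t" "t < 1" for t
  proof -
    define x where "x = (1 - t) *\<^sub>R p + t *\<^sub>R w"
    have gx: "g x \<le> (1 - t) * g p + t * g w"
      unfolding x_def using conv t unfolding g_def[abs_def] by (intro convex_onD) auto
    have n1: "(norm x)\<^sup>2 = (1 - t) * (norm p)\<^sup>2 + t * (norm w)\<^sup>2 - t * (1 - t) * (norm (w - p))\<^sup>2"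
      using norm_comb_sq[of t p w 0] by (simp add: x_def)
    have n2: "(norm (x - y))\<^sup>2 = (1 - t) * (norm (p - y))\<^sup>2 + t * (norm (w - y))\<^sup>2 - t * (1 - t) * (norm (w - p))\<^sup>2"
      using norm_comb_sq[of t p w y] by (simp add: x_def)
    have ps: "\<And>v. psi y v = g v - \<rho> / 2 * (norm v)\<^sup>2 + (norm (v - y))\<^sup>2 / (2 * \<alpha>)"
      by (simp add: psi_def g_def)
    have "psi y x = g x - \<rho> / 2 * (norm x)\<^sup>2 + (norm (x - y))\<^sup>2 / (2 * \<alpha>)" by (rule ps)
    also have "\<dots> \<le> (1 - t) * g p + t * g w - \<rho> / 2 * ((1 - t) * (norm p)\<^sup>2 + t * (norm w)\<^sup>2 - t * (1 - t) * (norm (w - p))\<^sup>2)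
        + ((1 - t) * (norm (p - y))\<^sup>2 + t * (norm (w - y))\<^sup>2 - t * (1 - t) * (norm (w - p))\<^sup>2) / (2 * \<alpha>)"
      unfolding n1 n2 using gx by linarith
    also have "\<dots> = (1 - t) * psi y p + t * psi y w - t * (1 - t) * (\<mu> / 2 * (norm (w - p))\<^sup>2)"
      unfolding ps using alpha by (simp add: \<mu>_def field_simps)
    finally have "psi y x \<le> (1 - t) * psi y p + t * psi y w - t * (1 - t) * (\<mu> / 2 * (norm (w - p))\<^sup>2)" .
    with pmin[of x] have T: "t * (psi y p - psi y w + (1 - t) * (\<mu> / 2 * (norm (w - p))\<^sup>2)) \<le> 0"
      by (simp add: algebra_simps)
    have "psi y p - psi y w + (1 - t) * (\<mu> / 2 * (norm (w - p))\<^sup>2) \<le> 0"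
      using T t by (simp add: mult_le_0_iff)
    moreover have "(1 - t) * (\<mu> / 2 * (norm (w - p))\<^sup>2) = \<mu> / 2 * (norm (w - p))\<^sup>2 - t * (\<mu> / 2 * (norm (w - p))\<^sup>2)"
      by (simp add: left_diff_distrib)
    ultimately show ?thesis by linarith
  qed
  have "psi y p + \<mu> / 2 * (norm (w - p))\<^sup>2 - psi y w \<le> 0"
    by (rule small_gap[OF key]) (use mu in auto)
  then show ?thesis by (simp add: p_def \<mu>_def)
qed

lemma prox_lip: "norm (prox \<alpha> h y1 - prox \<alpha> h y2) \<le> norm (y1 - y2) / (1 - \<alpha> * \<rho>)"
proof -
  define p1 where "p1 = prox \<alpha> h y1"
  define p2 where "p2 = prox \<alpha> h y2"
  define \<mu> where "\<mu> = 1 / \<alpha> - \<rho>"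
  have mu: "\<mu> > 0" using arho alpha by (simp add: \<mu>_def field_simps)
  have A: "psi y1 p1 + \<mu> / 2 * (norm (p2 - p1))\<^sup>2 \<le> psi y1 p2"
    using prox_strong[of y1 p2] by (simp add: p1_def \<mu>_def)
  have B: "psi y2 p2 + \<mu> / 2 * (norm (p1 - p2))\<^sup>2 \<le> psi y2 p1"
    using prox_strong[of y2 p1] by (simp add: p2_def \<mu>_def)
  have nc: "norm (p2 - p1) = norm (p1 - p2)" by (rule norm_minus_commute)
  have "\<mu> * (norm (p1 - p2))\<^sup>2 \<le> ((norm (p2 - y1))\<^sup>2 + (norm (p1 - y2))\<^sup>2 - (norm (p1 - y1))\<^sup>2 - (norm (p2 - y2))\<^sup>2) / (2 * \<alpha>)"
  proof -
    have "\<mu> * (norm (p1 - p2))\<^sup>2 \<le> ((norm (p2 - y1))\<^sup>2 / (2 * \<alpha>) + (norm (p1 - y2))\<^sup>2 / (2 * \<alpha>)) - ((norm (p1 - y1))\<^sup>2 / (2 * \<alpha>) + (norm (p2 - y2))\<^sup>2 / (2 * \<alpha>))"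
      using A B unfolding psi_def nc by linarith
    also have "\<dots> = ((norm (p2 - y1))\<^sup>2 + (norm (p1 - y2))\<^sup>2 - (norm (p1 - y1))\<^sup>2 - (norm (p2 - y2))\<^sup>2) / (2 * \<alpha>)"
      by (simp add: add_divide_distrib diff_divide_distrib)
    finally show ?thesis .
  qed
  also have "(norm (p2 - y1))\<^sup>2 + (norm (p1 - y2))\<^sup>2 - (norm (p1 - y1))\<^sup>2 - (norm (p2 - y2))\<^sup>2 = 2 * ((p1 - p2) \<bullet> (y1 - y2))"
    unfolding power2_norm_eq_inner by (simp add: inner_simps algebra_simps inner_commute)
  also have "2 * ((p1 - p2) \<bullet> (y1 - y2)) / (2 * \<alpha>) \<le> norm (p1 - p2) * norm (y1 - y2) / \<alpha>"
    using alpha Cauchy_Schwarz_ineq2[of "p1 - p2" "y1 - y2"] by (simp add: divide_right_mono)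
  finally have C: "\<mu> * (norm (p1 - p2))\<^sup>2 \<le> norm (p1 - p2) * norm (y1 - y2) / \<alpha>" .
  have "\<alpha> * \<mu> = 1 - \<alpha> * \<rho>" using alpha by (simp add: \<mu>_def field_simps)
  show ?thesis
  proof (cases "norm (p1 - p2) = 0")
    case True then show ?thesis using arho by (simp add: p1_def p2_def)
  next
    case False
    then have pos: "norm (p1 - p2) > 0" by simp
    from C have "norm (p1 - p2) * (\<alpha> * \<mu> * norm (p1 - p2)) \<le> norm (p1 - p2) * norm (y1 - y2)"
      using alpha by (simp add: field_simps power2_eq_square)
    then have "\<alpha> * \<mu> * norm (p1 - p2) \<le> norm (y1 - y2)" using pos by simp
    then have "(1 - \<alpha> * \<rho>) * norm (p1 - p2) \<le> norm (y1 - y2)" using \<open>\<alpha> * \<mu> = 1 - \<alpha> * \<rho>\<close> by simp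
    then show ?thesis using arho by (simp add: p1_def p2_def field_simps)
  qed
qed

lemma prox_subgrad: "(1 / \<alpha>) *\<^sub>R (y - prox \<alpha> h y) \<in> frechet_subdiff h (prox \<alpha> h y)"
proof -
  define p where "p = prox \<alpha> h y"
  define v where "v = (1 / \<alpha>) *\<^sub>R (y - p)"
  have ineq: "h w \<ge> h p + v \<bullet> (w - p) - (norm (w - p))\<^sup>2 / (2 * \<alpha>)" for w
  proof -
    have m: "h p + (norm (p - y))\<^sup>2 / (2 * \<alpha>) \<le> h w + (norm (w - y))\<^sup>2 / (2 * \<alpha>)"
      unfolding p_def by (rule prox_min)
    have "(norm (w - y))\<^sup>2 = (norm (w - p))\<^sup>2 + 2 * ((w - p) \<bullet> (p - y)) + (norm (p - y))\<^sup>2"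
    proof -
      have "w - y = (w - p) + (p - y)" by simp
      moreover have "(norm ((w - p) + (p - y)))\<^sup>2 = (norm (w - p))\<^sup>2 + 2 * ((w - p) \<bullet> (p - y)) + (norm (p - y))\<^sup>2"
        by (simp only: power2_norm_eq_inner inner_add_left inner_add_right inner_commute[of "p - y" "w - p"])
      ultimately show ?thesis by simp
    qed
    moreover have "v \<bullet> (w - p) = - (((w - p) \<bullet> (p - y)) / \<alpha>)"
    proof -
      have "(y - p) \<bullet> (w - p) = - ((w - p) \<bullet> (p - y))" by (metis inner_commute inner_minus_right minus_diff_eq)
      then show ?thesis by (simp add: v_def)
    qed
    moreover have "((norm (w - p))\<^sup>2 + 2 * ((w - p) \<bullet> (p - y)) + (norm (p - y))\<^sup>2) / (2 * \<alpha>)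
       = (norm (w - p))\<^sup>2 / (2 * \<alpha>) + ((w - p) \<bullet> (p - y)) / \<alpha> + (norm (p - y))\<^sup>2 / (2 * \<alpha>)"
      using alpha by (simp add: field_simps)
    ultimately have "(norm (w - y))\<^sup>2 / (2 * \<alpha>) = (norm (w - p))\<^sup>2 / (2 * \<alpha>) + ((w - p) \<bullet> (p - y)) / \<alpha> + (norm (p - y))\<^sup>2 / (2 * \<alpha>)"
      and "v \<bullet> (w - p) = - (((w - p) \<bullet> (p - y)) / \<alpha>)" by simp_all
    then show ?thesis using m by linarith
  qed
  have "v \<in> frechet_subdiff h p"
    unfolding frechet_subdiff_def
  proof (safe)
    fix e :: real assume e: "e > 0"
    show "\<forall>\<^sub>F w in at p. h p + v \<bullet> (w - p) - e * norm (w - p) \<le> h w"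
      unfolding eventually_at
    proof (intro exI[of _ "2 * \<alpha> * e"] conjI ballI impI)
      show "0 < 2 * \<alpha> * e" using alpha e by simp
      fix w assume "w \<noteq> p \<and> dist w p < 2 * \<alpha> * e"
      then have d: "norm (w - p) < 2 * \<alpha> * e" by (simp add: dist_norm)
      have "(norm (w - p))\<^sup>2 / (2 * \<alpha>) \<le> e * norm (w - p)"
      proof -
        have "(norm (w - p))\<^sup>2 \<le> (2 * \<alpha> * e) * norm (w - p)"
          using d unfolding power2_eq_square by (intro mult_right_mono) auto
        then show ?thesis using alpha by (simp add: field_simps)
      qed
      then show "h p + v \<bullet> (w - p) - e * norm (w - p) \<le> h w" using ineq[of w] by linarith
    qed
  qed
  then show ?thesis by (simp add: p_def v_def)
qed

lemma G_lip: "norm (Gmap \<alpha> h z u - Gmap \<alpha> h z v) \<le> norm (u - v) / (1 - \<alpha> * \<rho>)"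
proof -
  have "Gmap \<alpha> h z u - Gmap \<alpha> h z v = (1 / \<alpha>) *\<^sub>R (prox \<alpha> h (z - \<alpha> *\<^sub>R v) - prox \<alpha> h (z - \<alpha> *\<^sub>R u))"
    unfolding Gmap_def by (simp add: algebra_simps)
  then have "norm (Gmap \<alpha> h z u - Gmap \<alpha> h z v) = norm (prox \<alpha> h (z - \<alpha> *\<^sub>R v) - prox \<alpha> h (z - \<alpha> *\<^sub>R u)) / \<alpha>"
    using alpha by simp
  also have "\<dots> \<le> (norm ((z - \<alpha> *\<^sub>R v) - (z - \<alpha> *\<^sub>R u)) / (1 - \<alpha> * \<rho>)) / \<alpha>"
    using alpha by (intro divide_right_mono prox_lip) auto
  also have "norm ((z - \<alpha> *\<^sub>R v) - (z - \<alpha> *\<^sub>R u)) = \<alpha> * norm (u - v)"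
  proof -
    have "(z - \<alpha> *\<^sub>R v) - (z - \<alpha> *\<^sub>R u) = \<alpha> *\<^sub>R (u - v)" by (simp add: algebra_simps)
    then show ?thesis using alpha by simp
  qed
  finally show ?thesis using alpha by simp
qed

lemma G_sub: "(norm (Gmap \<alpha> h z u - u))\<^sup>2 \<le> Bh"
proof -
  define y where "y = z - \<alpha> *\<^sub>R u"
  have "(1 / \<alpha>) *\<^sub>R (y - prox \<alpha> h y) = Gmap \<alpha> h z u - u"
    unfolding Gmap_def y_def using alpha by (simp add: algebra_simps)
  then show ?thesis using sub prox_subgrad[of y] by metis
qed

lemma descent:
  fixes f :: "'a \<Rightarrow> real" and L :: real
  assumes fup: "\<And>x. f x \<le> f z + gf \<bullet> (x - z) + L / 2 * (norm (x - z))\<^sup>2"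
    and L: "L \<ge> 0"
  defines "\<delta> \<equiv> 1 / (1 - \<alpha> * \<rho>)\<^sup>2"
  shows "f (prox \<alpha> h (z - \<alpha> *\<^sub>R D)) + h (prox \<alpha> h (z - \<alpha> *\<^sub>R D)) - (f z + h z)
    \<le> - (\<alpha> - 2 * (\<rho> + L) * \<alpha>\<^sup>2) / 4 * (norm (Gmap \<alpha> h z D))\<^sup>2
       - \<alpha> / 8 * (norm (Gmap \<alpha> h z gf))\<^sup>2 - \<alpha> / 16 * (norm gf)\<^sup>2 + \<alpha> * Bh / 8
       + \<alpha> * (2 + \<delta>) / 2 * (norm (D - gf))\<^sup>2"
proof -
  define y where "y = z - \<alpha> *\<^sub>R D"
  define p where "p = prox \<alpha> h y"
  define G where "G = Gmap \<alpha> h z D"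
  define G0 where "G0 = Gmap \<alpha> h z gf"
  define e where "e = D - gf"
  have pz: "p - z = - \<alpha> *\<^sub>R G" unfolding G_def Gmap_def p_def y_def using alpha by simp
  have py: "p - y = \<alpha> *\<^sub>R (D - G)" using pz unfolding y_def by (simp add: algebra_simps)
  have zy: "z - y = \<alpha> *\<^sub>R D" by (simp add: y_def)
  have S: "h p + (norm (p - y))\<^sup>2 / (2 * \<alpha>) + (1 / \<alpha> - \<rho>) / 2 * (norm (z - p))\<^sup>2 \<le> h z + (norm (z - y))\<^sup>2 / (2 * \<alpha>)"
    using prox_strong[of y z] unfolding psi_def p_def .
  have nDG: "(norm (D - G))\<^sup>2 = (norm D)\<^sup>2 - 2 * (D \<bullet> G) + (norm G)\<^sup>2"
    by (simp add: power2_norm_eq_inner inner_simps inner_commute)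
  have n1: "(norm (p - y))\<^sup>2 = \<alpha>\<^sup>2 * ((norm D)\<^sup>2 - 2 * (D \<bullet> G) + (norm G)\<^sup>2)"
    unfolding py nDG[symmetric] using alpha by (simp add: power_mult_distrib)
  have n2: "(norm (z - y))\<^sup>2 = \<alpha>\<^sup>2 * (norm D)\<^sup>2" unfolding zy using alpha by (simp add: power_mult_distrib)
  have n3: "(norm (z - p))\<^sup>2 = \<alpha>\<^sup>2 * (norm G)\<^sup>2"
  proof -
    have "z - p = \<alpha> *\<^sub>R G" using pz by (simp add: algebra_simps)
    then show ?thesis using alpha by (simp add: power_mult_distrib)
  qed
  have F: "f p \<le> f z - \<alpha> * (gf \<bullet> G) + L / 2 * (\<alpha>\<^sup>2 * (norm G)\<^sup>2)"
    using fup[of p] unfolding pz using n3 by (simp add: power_mult_distrib norm_minus_commute)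
  have Hh: "h p - h z \<le> \<alpha> * (D \<bullet> G) - (\<alpha> - \<rho> * \<alpha>\<^sup>2 / 2) * (norm G)\<^sup>2"
  proof -
    have "h p - h z \<le> (norm (z - y))\<^sup>2 / (2 * \<alpha>) - (norm (p - y))\<^sup>2 / (2 * \<alpha>) - (1 / \<alpha> - \<rho>) / 2 * (norm (z - p))\<^sup>2"
      using S by linarith
    also have "\<dots> = \<alpha> * (D \<bullet> G) - (\<alpha> - \<rho> * \<alpha>\<^sup>2 / 2) * (norm G)\<^sup>2"
      unfolding n1 n2 n3 using alpha by (simp add: field_simps power2_eq_square)
    finally show ?thesis .
  qed
  have I: "e \<bullet> G \<le> (norm e)\<^sup>2 + (norm G)\<^sup>2 / 4"
  proof -
    have "0 \<le> (norm (e - (1/2) *\<^sub>R G))\<^sup>2" by simp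
    also have "\<dots> = (norm e)\<^sup>2 - e \<bullet> G + (norm G)\<^sup>2 / 4"
      by (simp add: power2_norm_eq_inner inner_simps inner_commute algebra_simps)
    finally show ?thesis by simp
  qed
  have GG0: "(norm (G - G0))\<^sup>2 \<le> \<delta> * (norm e)\<^sup>2"
  proof -
    have "norm (G - G0) \<le> norm e / (1 - \<alpha> * \<rho>)" unfolding G_def G0_def e_def by (rule G_lip)
    then have "(norm (G - G0))\<^sup>2 \<le> (norm e / (1 - \<alpha> * \<rho>))\<^sup>2" by (intro power_mono) auto
    then show ?thesis by (simp add: \<delta>_def power_divide)
  qed
  have sq2: "\<And>a b :: 'a. (norm (a + b))\<^sup>2 \<le> 2 * (norm a)\<^sup>2 + 2 * (norm b)\<^sup>2"
  proof -
    fix a b :: 'a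
    have "(norm (a + b))\<^sup>2 \<le> (norm a + norm b)\<^sup>2" by (intro power_mono norm_triangle_ineq) auto
    also have "\<dots> \<le> 2 * (norm a)\<^sup>2 + 2 * (norm b)\<^sup>2"
    proof -
      have "0 \<le> (norm a - norm b)\<^sup>2" by simp
      then show ?thesis unfolding power2_sum using power2_diff[of "norm a" "norm b"] by linarith
    qed
    finally show "(norm (a + b))\<^sup>2 \<le> 2 * (norm a)\<^sup>2 + 2 * (norm b)\<^sup>2" .
  qed
  have B1: "(norm G0)\<^sup>2 \<le> 2 * (norm G)\<^sup>2 + 2 * (\<delta> * (norm e)\<^sup>2)"
    using sq2[of G "G0 - G"] GG0 by (simp add: norm_minus_commute)
  have B2: "(norm gf)\<^sup>2 \<le> 2 * (norm G0)\<^sup>2 + 2 * Bh"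
    using sq2[of G0 "gf - G0"] G_sub[of z gf] by (simp add: norm_minus_commute G0_def)
  have eq: "D \<bullet> G - gf \<bullet> G = e \<bullet> G" by (simp add: e_def inner_diff_left)
  have F1: "f p + h p - (f z + h z) \<le> \<alpha> * (e \<bullet> G) - (\<alpha> * (norm G)\<^sup>2 - (\<rho> + L) * \<alpha>\<^sup>2 * (norm G)\<^sup>2 / 2)"
  proof -
    have "f p + h p - (f z + h z) \<le> \<alpha> * (D \<bullet> G) - \<alpha> * (gf \<bullet> G) - (\<alpha> - \<rho> * \<alpha>\<^sup>2 / 2) * (norm G)\<^sup>2 + L / 2 * (\<alpha>\<^sup>2 * (norm G)\<^sup>2)"
      using F Hh by linarith
    also have "\<dots> = \<alpha> * (e \<bullet> G) - (\<alpha> * (norm G)\<^sup>2 - (\<rho> + L) * \<alpha>\<^sup>2 * (norm G)\<^sup>2 / 2)"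
      unfolding eq[symmetric, unfolded diff_eq_eq] by (simp add: field_simps)
    finally show ?thesis .
  qed
  have F2: "\<alpha> * (e \<bullet> G) \<le> \<alpha> * (norm e)\<^sup>2 + \<alpha> * (norm G)\<^sup>2 / 4"
    using mult_left_mono[OF I, of \<alpha>] alpha by (simp add: algebra_simps)
  have F3: "\<alpha> * (norm G0)\<^sup>2 / 4 \<le> \<alpha> * (norm G)\<^sup>2 / 2 + \<alpha> * \<delta> * (norm e)\<^sup>2 / 2"
    using mult_left_mono[OF B1, of "\<alpha>/4"] alpha by (simp add: algebra_simps)
  have F4: "\<alpha> * (norm gf)\<^sup>2 / 16 \<le> \<alpha> * (norm G0)\<^sup>2 / 8 + \<alpha> * Bh / 8"
    using mult_left_mono[OF B2, of "\<alpha>/16"] alpha by (simp add: algebra_simps)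
  have "f p + h p - (f z + h z) \<le> -(\<alpha> * (norm G)\<^sup>2)/4 + (\<rho>+L)*\<alpha>\<^sup>2*(norm G)\<^sup>2/2 - \<alpha>*(norm G0)\<^sup>2/8
      - \<alpha>*(norm gf)\<^sup>2/16 + \<alpha>*Bh/8 + \<alpha>*(norm e)\<^sup>2 + \<alpha>*\<delta>*(norm e)\<^sup>2/2"
    using F1 F2 F3 F4 by linarith
  also have "\<dots> = - (\<alpha> - 2 * (\<rho> + L) * \<alpha>\<^sup>2) / 4 * (norm G)\<^sup>2
       - \<alpha> / 8 * (norm G0)\<^sup>2 - \<alpha> / 16 * (norm gf)\<^sup>2 + \<alpha> * Bh / 8
       + \<alpha> * (2 + \<delta>) / 2 * (norm e)\<^sup>2"
    by (simp add: field_simps)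
  finally have "f p + h p - (f z + h z) \<le> - (\<alpha> - 2 * (\<rho> + L) * \<alpha>\<^sup>2) / 4 * (norm G)\<^sup>2
       - \<alpha> / 8 * (norm G0)\<^sup>2 - \<alpha> / 16 * (norm gf)\<^sup>2 + \<alpha> * Bh / 8
       + \<alpha> * (2 + \<delta>) / 2 * (norm e)\<^sup>2" .
  then show ?thesis by (simp add: p_def y_def G_def G0_def e_def)
qed

end

lemma sgrad_cong: "(\<And>b. b < B \<Longrightarrow> s b = s' b) \<Longrightarrow> sgrad gF B i x s = sgrad gF B i x s'"
  unfolding sgrad_def by (intro arg_cong[where f="\<lambda>v. _ *\<^sub>R v"] sum.cong) auto

lemma local_pt_cong:
  "(\<And>k' b. k' < k \<Longrightarrow> b < B \<Longrightarrow> s k' b = s' k' b) \<Longrightarrow>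
   local_pt gF B \<beta> c i z s k = local_pt gF B \<beta> c i z s' k"
proof (induction k)
  case 0 then show ?case by simp
next
  case (Suc k)
  have IH: "local_pt gF B \<beta> c i z s k = local_pt gF B \<beta> c i z s' k" using Suc by auto
  have "sgrad gF B i (local_pt gF B \<beta> c i z s k) (s k) = sgrad gF B i (local_pt gF B \<beta> c i z s k) (s' k)"
    using Suc.prems by (intro sgrad_cong) auto
  then show ?case using IH by simp
qed

lemma fed_cong:
  assumes "\<And>s i k b. s < t \<Longrightarrow> i < N \<Longrightarrow> k < K \<Longrightarrow> b < B \<Longrightarrow> \<xi> s i k b = \<xi>' s i k b"
  shows "fst (fedcanon gF B \<alpha> \<beta> K N h z0 c0 \<xi> t) = fst (fedcanon gF B \<alpha> \<beta> K N h z0 c0 \<xi>' t)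
    \<and> (\<forall>i<N. snd (fedcanon gF B \<alpha> \<beta> K N h z0 c0 \<xi> t) i = snd (fedcanon gF B \<alpha> \<beta> K N h z0 c0 \<xi>' t) i)"
  using assms
proof (induction t)
  case 0 then show ?case by simp
next
  case (Suc t)
  define st where "st = fedcanon gF B \<alpha> \<beta> K N h z0 c0 \<xi> t"
  define st' where "st' = fedcanon gF B \<alpha> \<beta> K N h z0 c0 \<xi>' t"
  have IH: "fst st = fst st'" "\<And>i. i < N \<Longrightarrow> snd st i = snd st' i"
    using Suc.IH Suc.prems unfolding st_def st'_def by auto
  have dl: "fc_delta gF B \<beta> K (snd st i) i (fst st) (\<xi> t i) = fc_delta gF B \<beta> K (snd st' i) i (fst st') (\<xi>' t i)"
    if "i < N" for i
    unfolding fc_delta_def IH(1) IH(2)[OF that]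
    using Suc.prems that by (intro arg_cong[where f="\<lambda>v. _ *\<^sub>R (_ - v)"] local_pt_cong) auto
  have db: "fc_Dbar gF B \<beta> K N st (\<xi> t) = fc_Dbar gF B \<beta> K N st' (\<xi>' t)"
    unfolding fc_Dbar_def using dl by (intro arg_cong[where f="\<lambda>v. _ *\<^sub>R v"] sum.cong) auto
  show ?case
    using IH dl db by (simp add: Let_def st_def[symmetric] st'_def[symmetric])
qed

locale fcB = proxA h \<rho> \<alpha> Bh
  for h :: "'a::euclidean_space \<Rightarrow> real" and \<rho> \<alpha> Bh :: real +
  fixes M :: "'w measure" and D :: "nat \<Rightarrow> 'b measure"
    and X :: "nat \<Rightarrow> nat \<Rightarrow> nat \<Rightarrow> nat \<Rightarrow> 'w \<Rightarrow> 'b"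
    and gF :: "nat \<Rightarrow> 'a \<Rightarrow> 'b \<Rightarrow> 'a"
    and gradf :: "nat \<Rightarrow> 'a \<Rightarrow> 'a"
    and N K B :: nat and L \<sigma> \<beta> :: real
    and z0 :: 'a and c0 :: "nat \<Rightarrow> 'a"
  assumes N_pos: "N > 0" and K_pos: "K > 0" and B_pos: "B > 0"
    and M_prob: "prob_space M"
    and D_prob: "\<forall>i<N. prob_space (D i)"
    and X_indep: "prob_space.indep_vars M (\<lambda>(s, i, k, b). D i) (\<lambda>(s, i, k, b). X s i k b)
                    {(s, i, k, b). i < N \<and> k < K \<and> b < B}"
    and X_distr: "\<forall>s i k b. i < N \<longrightarrow> k < K \<longrightarrow> b < B \<longrightarrow> distr M (D i) (X s i k b) = D i"
    and A2_L: "L > 0"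
    and A2_lip: "\<forall>i<N. \<forall>x y. norm (gradf i x - gradf i y) \<le> L * norm (x - y)"
    and A4_meas: "\<forall>i<N. (\<lambda>p. gF i (fst p) (snd p)) \<in> borel_measurable (borel \<Otimes>\<^sub>M D i)"
    and A4_unbiased: "\<forall>i<N. \<forall>x. integrable (D i) (gF i x) \<and> integral\<^sup>L (D i) (gF i x) = gradf i x"
    and A4_var: "\<forall>i<N. \<forall>x. integrable (D i) (\<lambda>\<xi>. (norm (gF i x \<xi> - gradf i x))\<^sup>2)
                   \<and> integral\<^sup>L (D i) (\<lambda>\<xi>. (norm (gF i x \<xi> - gradf i x))\<^sup>2) \<le> \<sigma>\<^sup>2"
    and c0_sum: "(\<Sum>i<N. c0 i) = 0"
    and beta_pos: "\<beta> > 0"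
    and beta_bound: "24 * real K * (real K - 1) * L\<^sup>2 * \<beta>\<^sup>2 \<le> 1"
begin

sublocale P: prob_space M by (rule M_prob)

lemma Dprob: "i < N \<Longrightarrow> prob_space (D i)" using D_prob by auto

definition fed where "fed \<xi> t = fedcanon gF B \<alpha> \<beta> K N h z0 c0 \<xi> t"
definition zf where "zf \<xi> t = fst (fed \<xi> t)"
definition cf where "cf \<xi> t = snd (fed \<xi> t)"
definition xl where "xl \<xi> t i k = local_pt gF B \<beta> (cf \<xi> t i) i (zf \<xi> t) (\<xi> t i) k"
definition zeta where "zeta \<xi> t i k b = gF i (xl \<xi> t i k) (\<xi> t i k b) - gradf i (xl \<xi> t i k)"

definition Idx where "Idx = {(s, i, k, b). i < N \<and> k < K \<and> b < B}"
definition DD where "DD = (\<lambda>(s::nat, i, k::nat, b::nat). D i)"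
definition XI where "XI = (\<lambda>(s, i, k, b). X s i k b)"
definition Xw where "Xw \<omega> = (\<lambda>s i k b. X s i k b \<omega>)"
definition cur :: "(nat \<times> nat \<times> nat \<times> nat \<Rightarrow> 'b) \<Rightarrow> nat \<Rightarrow> nat \<Rightarrow> nat \<Rightarrow> nat \<Rightarrow> 'b"
  where "cur u = (\<lambda>s i k b. u (s, i, k, b))"
definition upd :: "(nat \<times> nat \<times> nat \<times> nat \<Rightarrow> 'b) \<Rightarrow> nat \<times> nat \<times> nat \<times> nat \<Rightarrow> 'b \<Rightarrow> nat \<Rightarrow> nat \<Rightarrow> nat \<Rightarrow> nat \<Rightarrow> 'b"
  where "upd u a v = (\<lambda>s i k b. if (s, i, k, b) = a then v else u (s, i, k, b))"
definition Pre where "Pre t = {(s, i, k, b). s < t \<and> i < N \<and> k < K \<and> b < B}"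
definition Loc where "Loc t i k = Pre t \<union> {(s, i', k', b). s = t \<and> i' = i \<and> k' < k \<and> b < B}"

definition MS where "MS \<Omega> \<xi> S \<longleftrightarrow> (\<forall>s i k b. (s, i, k, b) \<in> S \<longrightarrow> (\<lambda>\<omega>. \<xi> \<omega> s i k b) \<in> measurable \<Omega> (D i))"

lemma prox_cont: "continuous_on UNIV (prox \<alpha> h)"
proof (rule lipschitz_on_continuous_on)
  show "(1 / (1 - \<alpha> * \<rho>))-lipschitz_on UNIV (prox \<alpha> h)"
    using prox_lip arho by (intro lipschitz_onI) (auto simp: dist_norm)
qed

lemma gradf_cont: "i < N \<Longrightarrow> continuous_on UNIV (gradf i)"
proof (rule lipschitz_on_continuous_on)
  assume "i < N"
  then show "L-lipschitz_on UNIV (gradf i)"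
    using A2_lip A2_L by (intro lipschitz_onI) (auto simp: dist_norm)
qed

lemma meas_gF:
  assumes "i < N" "x \<in> borel_measurable \<Omega>" "s \<in> measurable \<Omega> (D i)"
  shows "(\<lambda>\<omega>. gF i (x \<omega>) (s \<omega>)) \<in> borel_measurable \<Omega>"
proof -
  have p: "(\<lambda>\<omega>. (x \<omega>, s \<omega>)) \<in> measurable \<Omega> (borel \<Otimes>\<^sub>M D i)"
    using assms by (intro measurable_Pair) auto
  have g: "(\<lambda>p. gF i (fst p) (snd p)) \<in> borel_measurable (borel \<Otimes>\<^sub>M D i)"
    using A4_meas assms(1) by auto
  show ?thesis using measurable_compose[OF p g] by simp
qed

lemma meas_sgrad:
  assumes "i < N" "x \<in> borel_measurable \<Omega>" "\<And>b. b < B \<Longrightarrow> (\<lambda>\<omega>. s \<omega> b) \<in> measurable \<Omega> (D i)"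
  shows "(\<lambda>\<omega>. sgrad gF B i (x \<omega>) (s \<omega>)) \<in> borel_measurable \<Omega>"
  unfolding sgrad_def
  by (intro borel_measurable_scaleR borel_measurable_const borel_measurable_sum meas_gF assms) auto

lemma meas_local_pt:
  assumes "i < N" "z \<in> borel_measurable \<Omega>" "c \<in> borel_measurable \<Omega>"
    "\<And>k' b. k' < k \<Longrightarrow> b < B \<Longrightarrow> (\<lambda>\<omega>. s \<omega> k' b) \<in> measurable \<Omega> (D i)"
  shows "(\<lambda>\<omega>. local_pt gF B \<beta> (c \<omega>) i (z \<omega>) (s \<omega>) k) \<in> borel_measurable \<Omega>"
  using assms(4)
proof (induction k)
  case 0 then show ?case using assms(2) by simp
next
  case (Suc k)
  have x: "(\<lambda>\<omega>. local_pt gF B \<beta> (c \<omega>) i (z \<omega>) (s \<omega>) k) \<in> borel_measurable \<Omega>"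
    using Suc by auto
  have sg: "(\<lambda>\<omega>. sgrad gF B i (local_pt gF B \<beta> (c \<omega>) i (z \<omega>) (s \<omega>) k) (s \<omega> k)) \<in> borel_measurable \<Omega>"
    using Suc.prems by (intro meas_sgrad[OF assms(1) x]) auto
  show ?case using x sg assms(3) by simp
qed

lemma meas_fed:
  assumes "MS \<Omega> \<xi> (Pre t)"
  shows "(\<lambda>\<omega>. zf (\<xi> \<omega>) t) \<in> borel_measurable \<Omega> \<and> (\<forall>i<N. (\<lambda>\<omega>. cf (\<xi> \<omega>) t i) \<in> borel_measurable \<Omega>)"
  using assms
proof (induction t)
  case 0 then show ?case by (simp add: zf_def cf_def fed_def)
next
  case (Suc t)
  have MSt: "MS \<Omega> \<xi> (Pre t)" using Suc.prems unfolding MS_def Pre_def by auto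
  have z: "(\<lambda>\<omega>. zf (\<xi> \<omega>) t) \<in> borel_measurable \<Omega>" and c: "\<And>i. i < N \<Longrightarrow> (\<lambda>\<omega>. cf (\<xi> \<omega>) t i) \<in> borel_measurable \<Omega>"
    using Suc.IH[OF MSt] by auto
  have dl: "(\<lambda>\<omega>. fc_delta gF B \<beta> K (cf (\<xi> \<omega>) t i) i (zf (\<xi> \<omega>) t) (\<xi> \<omega> t i)) \<in> borel_measurable \<Omega>"
    if i: "i < N" for i
    unfolding fc_delta_def
  proof (intro borel_measurable_scaleR borel_measurable_const borel_measurable_diff z)
    show "(\<lambda>\<omega>. local_pt gF B \<beta> (cf (\<xi> \<omega>) t i) i (zf (\<xi> \<omega>) t) (\<xi> \<omega> t i) K) \<in> borel_measurable \<Omega>"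
      using Suc.prems i by (intro meas_local_pt z c) (auto simp: MS_def Pre_def)
  qed
  have db: "(\<lambda>\<omega>. fc_Dbar gF B \<beta> K N (fed (\<xi> \<omega>) t) (\<xi> \<omega> t)) \<in> borel_measurable \<Omega>"
    unfolding fc_Dbar_def
  proof (intro borel_measurable_scaleR borel_measurable_const borel_measurable_sum)
    fix i assume "i \<in> {..<N}"
    then show "(\<lambda>\<omega>. fc_delta gF B \<beta> K (snd (fed (\<xi> \<omega>) t) i) i (fst (fed (\<xi> \<omega>) t)) (\<xi> \<omega> t i)) \<in> borel_measurable \<Omega>"
      using dl[of i] unfolding zf_def cf_def by simp
  qed
  have pr: "(\<lambda>\<omega>. prox \<alpha> h (zf (\<xi> \<omega>) t - \<alpha> *\<^sub>R fc_Dbar gF B \<beta> K N (fed (\<xi> \<omega>) t) (\<xi> \<omega> t))) \<in> borel_measurable \<Omega>"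
    using z db by (intro borel_measurable_continuous_on[OF prox_cont] borel_measurable_diff borel_measurable_scaleR borel_measurable_const)
  have e1: "(\<lambda>\<omega>. zf (\<xi> \<omega>) (Suc t)) = (\<lambda>\<omega>. prox \<alpha> h (zf (\<xi> \<omega>) t - \<alpha> *\<^sub>R fc_Dbar gF B \<beta> K N (fed (\<xi> \<omega>) t) (\<xi> \<omega> t)))"
    by (simp add: zf_def fed_def Let_def)
  have e2: "(\<lambda>\<omega>. cf (\<xi> \<omega>) (Suc t) i) = (\<lambda>\<omega>. cf (\<xi> \<omega>) t i + fc_Dbar gF B \<beta> K N (fed (\<xi> \<omega>) t) (\<xi> \<omega> t)
      - fc_delta gF B \<beta> K (cf (\<xi> \<omega>) t i) i (zf (\<xi> \<omega>) t) (\<xi> \<omega> t i))" for i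
    by (simp add: zf_def cf_def fed_def Let_def)
  show ?case
  proof
    show "(\<lambda>\<omega>. zf (\<xi> \<omega>) (Suc t)) \<in> borel_measurable \<Omega>" unfolding e1 by (rule pr)
    show "\<forall>i<N. (\<lambda>\<omega>. cf (\<xi> \<omega>) (Suc t) i) \<in> borel_measurable \<Omega>"
    proof (intro allI impI)
      fix i assume i: "i < N"
      show "(\<lambda>\<omega>. cf (\<xi> \<omega>) (Suc t) i) \<in> borel_measurable \<Omega>"
        unfolding e2 by (intro borel_measurable_add borel_measurable_diff c[OF i] db dl[OF i])
    qed
  qed
qed

lemma meas_xl:
  assumes "MS \<Omega> \<xi> (Loc t i k)" "i < N"
  shows "(\<lambda>\<omega>. xl (\<xi> \<omega>) t i k) \<in> borel_measurable \<Omega>"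
proof -
  have "MS \<Omega> \<xi> (Pre t)" using assms unfolding MS_def Loc_def by auto
  from meas_fed[OF this] assms(2) have "(\<lambda>\<omega>. zf (\<xi> \<omega>) t) \<in> borel_measurable \<Omega>" "(\<lambda>\<omega>. cf (\<xi> \<omega>) t i) \<in> borel_measurable \<Omega>"
    by auto
  then show ?thesis unfolding xl_def
    using assms by (intro meas_local_pt) (auto simp: MS_def Loc_def)
qed

lemma meas_zeta:
  assumes "MS \<Omega> \<xi> (Loc t i k \<union> {(t, i, k, b)})" "i < N"
  shows "(\<lambda>\<omega>. zeta (\<xi> \<omega>) t i k b) \<in> borel_measurable \<Omega>"
proof -
  have x: "(\<lambda>\<omega>. xl (\<xi> \<omega>) t i k) \<in> borel_measurable \<Omega>"
    using assms by (intro meas_xl) (auto simp: MS_def)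
  have s: "(\<lambda>\<omega>. \<xi> \<omega> t i k b) \<in> measurable \<Omega> (D i)" using assms by (auto simp: MS_def)
  show ?thesis unfolding zeta_def
    using meas_gF[OF assms(2) x s] borel_measurable_continuous_on[OF gradf_cont[OF assms(2)] x] by auto
qed

end

context fcB
begin

lemma X_indep': "P.indep_vars DD XI Idx"
  using X_indep unfolding DD_def XI_def Idx_def .

lemma XI_meas: "j \<in> Idx \<Longrightarrow> XI j \<in> measurable M (DD j)"
  using X_indep' unfolding P.indep_vars_def by auto

lemma X_meas: "i < N \<Longrightarrow> k < K \<Longrightarrow> b < B \<Longrightarrow> X s i k b \<in> measurable M (D i)"
  using XI_meas[of "(s, i, k, b)"] by (simp add: Idx_def XI_def DD_def)

lemma MS_M: "S \<subseteq> Idx \<Longrightarrow> MS M Xw S"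
  unfolding MS_def Xw_def using X_meas by (auto simp: Idx_def)

definition UJ where "UJ J \<omega> = (\<lambda>j\<in>J. XI j \<omega>)"
definition PU where "PU J = distr M (PiM J DD) (UJ J)"

lemma UJ_meas: "J \<subseteq> Idx \<Longrightarrow> UJ J \<in> measurable M (PiM J DD)"
  unfolding UJ_def by (intro measurable_restrict XI_meas) auto

lemma PU_prob: "J \<subseteq> Idx \<Longrightarrow> prob_space (PU J)"
  unfolding PU_def by (intro P.prob_space_distr UJ_meas)

lemma DD_a: "DD (t, i, k, b) = D i" by (simp add: DD_def)

definition VV where "VV a \<omega> = (\<lambda>j\<in>{a}. XI j \<omega>)"
definition PV where "PV a = distr M (PiM {a} DD) (VV a)"

lemma VV_meas: "a \<in> Idx \<Longrightarrow> VV a \<in> measurable M (PiM {a} DD)"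
  unfolding VV_def by (intro measurable_restrict XI_meas) auto

lemma indep_UV:
  assumes a: "a \<in> Idx" and J: "J \<subseteq> Idx" "a \<notin> J"
  shows "P.indep_var (PiM J DD) (UJ J) (PiM {a} DD) (VV a)"
  unfolding UJ_def VV_def using J a by (intro P.indep_var_restrict[OF X_indep']) auto

lemma distr_pair:
  assumes a: "a \<in> Idx" and J: "J \<subseteq> Idx" "a \<notin> J"
  shows "distr M (PiM J DD \<Otimes>\<^sub>M PiM {a} DD) (\<lambda>\<omega>. (UJ J \<omega>, VV a \<omega>)) = PU J \<Otimes>\<^sub>M PV a"
  using indep_UV[OF assms] unfolding P.indep_var_distribution_eq PU_def PV_def by metis

lemma pair_meas:
  assumes a: "a \<in> Idx" and J: "J \<subseteq> Idx"
  shows "(\<lambda>\<omega>. (UJ J \<omega>, VV a \<omega>)) \<in> measurable M (PiM J DD \<Otimes>\<^sub>M PiM {a} DD)"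
  using a J by (intro measurable_Pair UJ_meas VV_meas)

lemma comp_meas: "(\<lambda>v. v (t, i, k, b)) \<in> measurable (PiM {(t, i, k, b)} DD) (D i)"
  using measurable_component_singleton[of "(t, i, k, b)" "{(t, i, k, b)}" DD] by (simp add: DD_a)

lemma PV_distr:
  assumes a: "(t, i, k, b) \<in> Idx"
  shows "distr (PV (t, i, k, b)) (D i) (\<lambda>v. v (t, i, k, b)) = D i"
proof -
  have "distr (PV (t, i, k, b)) (D i) (\<lambda>v. v (t, i, k, b)) = distr M (D i) ((\<lambda>v. v (t, i, k, b)) \<circ> VV (t, i, k, b))"
    unfolding PV_def using VV_meas[OF a] comp_meas by (intro distr_distr) auto
  also have "(\<lambda>v. v (t, i, k, b)) \<circ> VV (t, i, k, b) = X t i k b" by (simp add: fun_eq_iff VV_def XI_def)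
  also have "distr M (D i) (X t i k b) = D i" using X_distr a by (auto simp: Idx_def)
  finally show ?thesis .
qed

lemma PV_prob: "a \<in> Idx \<Longrightarrow> prob_space (PV a)"
  unfolding PV_def by (intro P.prob_space_distr VV_meas)

lemma split_nn:
  fixes f :: "_ \<Rightarrow> ennreal"
  assumes a: "(t, i, k, b) \<in> Idx" and J: "J \<subseteq> Idx" "(t, i, k, b) \<notin> J"
    and f: "f \<in> borel_measurable (PiM J DD \<Otimes>\<^sub>M D i)"
  shows "(\<integral>\<^sup>+\<omega>. f (UJ J \<omega>, X t i k b \<omega>) \<partial>M) = (\<integral>\<^sup>+u. \<integral>\<^sup>+w. f (u, w) \<partial>D i \<partial>PU J)"
proof -
  define a where "a = (t, i, k, b)"
  have aI: "a \<in> Idx" "a \<notin> J" using a J by (auto simp: a_def)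
  interpret PVa: prob_space "PV a" using PV_prob[OF aI(1)] .
  define f' where "f' = (\<lambda>(u, v). f (u, v a))"
  have f'm: "f' \<in> borel_measurable (PiM J DD \<Otimes>\<^sub>M PiM {a} DD)"
  proof -
    have pm: "(\<lambda>p. (fst p, snd p (t, i, k, b))) \<in> measurable (PiM J DD \<Otimes>\<^sub>M PiM {(t, i, k, b)} DD) (PiM J DD \<Otimes>\<^sub>M D i)"
      by (intro measurable_Pair measurable_fst measurable_compose[OF measurable_snd comp_meas])
    show ?thesis using measurable_compose[OF pm f] unfolding f'_def a_def case_prod_unfold by simp
  qed
  have X: "\<And>\<omega>. X t i k b \<omega> = VV a \<omega> a" by (simp add: VV_def XI_def a_def)
  have "(\<integral>\<^sup>+\<omega>. f (UJ J \<omega>, X t i k b \<omega>) \<partial>M) = (\<integral>\<^sup>+\<omega>. f' (UJ J \<omega>, VV a \<omega>) \<partial>M)"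
    by (simp add: f'_def X)
  also have "\<dots> = (\<integral>\<^sup>+p. f' p \<partial>distr M (PiM J DD \<Otimes>\<^sub>M PiM {a} DD) (\<lambda>\<omega>. (UJ J \<omega>, VV a \<omega>)))"
    using f'm pair_meas[OF aI(1) J(1)] by (simp add: nn_integral_distr)
  also have "\<dots> = (\<integral>\<^sup>+p. f' p \<partial>(PU J \<Otimes>\<^sub>M PV a))" using distr_pair[OF aI(1) J(1) aI(2)] by simp
  also have "\<dots> = (\<integral>\<^sup>+u. \<integral>\<^sup>+v. f' (u, v) \<partial>PV a \<partial>PU J)"
  proof -
    have "sets (PU J \<Otimes>\<^sub>M PV a) = sets (PiM J DD \<Otimes>\<^sub>M PiM {a} DD)" by (simp add: PU_def PV_def)
    then have f'': "f' \<in> borel_measurable (PU J \<Otimes>\<^sub>M PV a)" using f'm by (simp cong: measurable_cong_sets)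
    show ?thesis using PVa.nn_integral_fst[OF f''] by simp
  qed
  also have "\<dots> = (\<integral>\<^sup>+u. \<integral>\<^sup>+w. f (u, w) \<partial>D i \<partial>PU J)"
  proof (rule nn_integral_cong)
    fix u assume u: "u \<in> space (PU J)"
    have fu: "(\<lambda>w. f (u, w)) \<in> borel_measurable (D i)"
      using u f by (intro measurable_Pair2[OF f]) (simp add: PU_def)
    have "(\<integral>\<^sup>+v. f' (u, v) \<partial>PV a) = (\<integral>\<^sup>+v. f (u, v a) \<partial>PV a)" by (simp add: f'_def)
    also have "\<dots> = (\<integral>\<^sup>+w. f (u, w) \<partial>distr (PV a) (D i) (\<lambda>v. v a))"
      using fu comp_meas unfolding a_def by (subst nn_integral_distr) (auto simp: PV_def)
    also have "\<dots> = (\<integral>\<^sup>+w. f (u, w) \<partial>D i)" using PV_distr[OF a] by (simp add: a_def)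
    finally show "(\<integral>\<^sup>+v. f' (u, v) \<partial>PV a) = (\<integral>\<^sup>+w. f (u, w) \<partial>D i)" .
  qed
  finally show ?thesis .
qed

lemma split_int:
  fixes f :: "_ \<Rightarrow> real"
  assumes a: "(t, i, k, b) \<in> Idx" and J: "J \<subseteq> Idx" "(t, i, k, b) \<notin> J"
    and f: "f \<in> borel_measurable (PiM J DD \<Otimes>\<^sub>M D i)"
    and fi: "integrable M (\<lambda>\<omega>. f (UJ J \<omega>, X t i k b \<omega>))"
  shows "(\<integral>\<omega>. f (UJ J \<omega>, X t i k b \<omega>) \<partial>M) = (\<integral>u. \<integral>w. f (u, w) \<partial>D i \<partial>PU J)"
proof -
  define a where "a = (t, i, k, b)"
  have aI: "a \<in> Idx" "a \<notin> J" using a J by (auto simp: a_def)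
  interpret PVa: prob_space "PV a" using PV_prob[OF aI(1)] .
  interpret PJ: prob_space "PU J" using PU_prob[OF J(1)] .
  interpret PP: pair_sigma_finite "PU J" "PV a" ..
  define f' where "f' = (\<lambda>(u, v). f (u, v a))"
  have f'm: "f' \<in> borel_measurable (PiM J DD \<Otimes>\<^sub>M PiM {a} DD)"
  proof -
    have pm: "(\<lambda>p. (fst p, snd p (t, i, k, b))) \<in> measurable (PiM J DD \<Otimes>\<^sub>M PiM {(t, i, k, b)} DD) (PiM J DD \<Otimes>\<^sub>M D i)"
      by (intro measurable_Pair measurable_fst measurable_compose[OF measurable_snd comp_meas])
    show ?thesis using measurable_compose[OF pm f] unfolding f'_def a_def case_prod_unfold by simp
  qed
  have X: "\<And>\<omega>. X t i k b \<omega> = VV a \<omega> a" by (simp add: VV_def XI_def a_def)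
  have eq: "distr M (PiM J DD \<Otimes>\<^sub>M PiM {a} DD) (\<lambda>\<omega>. (UJ J \<omega>, VV a \<omega>)) = PU J \<Otimes>\<^sub>M PV a"
    by (rule distr_pair[OF aI(1) J(1) aI(2)])
  have fi': "integrable M (\<lambda>\<omega>. f' (UJ J \<omega>, VV a \<omega>))" using fi by (simp add: f'_def X)
  have int': "integrable (PU J \<Otimes>\<^sub>M PV a) f'"
    using integrable_distr_eq[OF pair_meas[OF aI(1) J(1)] f'm] fi' eq by simp
  have "(\<integral>\<omega>. f (UJ J \<omega>, X t i k b \<omega>) \<partial>M) = (\<integral>\<omega>. f' (UJ J \<omega>, VV a \<omega>) \<partial>M)"
    by (simp add: f'_def X)
  also have "\<dots> = integral\<^sup>L (distr M (PiM J DD \<Otimes>\<^sub>M PiM {a} DD) (\<lambda>\<omega>. (UJ J \<omega>, VV a \<omega>))) f'"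
    using integral_distr[OF pair_meas[OF aI(1) J(1)] f'm] by simp
  also have "\<dots> = integral\<^sup>L (PU J \<Otimes>\<^sub>M PV a) f'" using eq by simp
  also have "\<dots> = (\<integral>u. \<integral>v. f' (u, v) \<partial>PV a \<partial>PU J)" using PP.integral_fst'[OF int'] by simp
  also have "\<dots> = (\<integral>u. \<integral>w. f (u, w) \<partial>D i \<partial>PU J)"
  proof (rule Bochner_Integration.integral_cong)
    show "PU J = PU J" by simp
  next
    fix u assume u: "u \<in> space (PU J)"
    have fu: "(\<lambda>w. f (u, w)) \<in> borel_measurable (D i)"
      using u f by (intro measurable_Pair2[OF f]) (simp add: PU_def)
    have "(\<integral>v. f' (u, v) \<partial>PV a) = (\<integral>v. f (u, v a) \<partial>PV a)" by (simp add: f'_def)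
    also have "\<dots> = (\<integral>w. f (u, w) \<partial>distr (PV a) (D i) (\<lambda>v. v a))"
      using fu comp_meas unfolding a_def by (subst integral_distr) (auto simp: PV_def)
    also have "\<dots> = (\<integral>w. f (u, w) \<partial>D i)" using PV_distr[OF a] by (simp add: a_def)
    finally show "(\<integral>v. f' (u, v) \<partial>PV a) = (\<integral>w. f (u, w) \<partial>D i)" .
  qed
  finally show ?thesis .
qed

lemma PU_int: "J \<subseteq> Idx \<Longrightarrow> (q :: _ \<Rightarrow> real) \<in> borel_measurable (PiM J DD) \<Longrightarrow>
    integrable (PU J) q \<longleftrightarrow> integrable M (\<lambda>\<omega>. q (UJ J \<omega>))"
  unfolding PU_def by (intro integrable_distr_eq UJ_meas) auto

end

context fcB
begin

definition agree where "agree S \<xi> \<xi>' \<longleftrightarrow> (\<forall>s i k b. (s, i, k, b) \<in> S \<longrightarrow> \<xi> s i k b = \<xi>' s i k b)"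

lemma agree_mono: "agree S \<xi> \<xi>' \<Longrightarrow> S' \<subseteq> S \<Longrightarrow> agree S' \<xi> \<xi>'"
  unfolding agree_def by blast

lemma fed_agree:
  assumes "agree (Pre t) \<xi> \<xi>'"
  shows "zf \<xi> t = zf \<xi>' t" "\<And>i. i < N \<Longrightarrow> cf \<xi> t i = cf \<xi>' t i"
proof -
  have "fst (fedcanon gF B \<alpha> \<beta> K N h z0 c0 \<xi> t) = fst (fedcanon gF B \<alpha> \<beta> K N h z0 c0 \<xi>' t)
    \<and> (\<forall>i<N. snd (fedcanon gF B \<alpha> \<beta> K N h z0 c0 \<xi> t) i = snd (fedcanon gF B \<alpha> \<beta> K N h z0 c0 \<xi>' t) i)"
    using assms by (intro fed_cong) (auto simp: agree_def Pre_def)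
  then show "zf \<xi> t = zf \<xi>' t" "\<And>i. i < N \<Longrightarrow> cf \<xi> t i = cf \<xi>' t i"
    by (auto simp: zf_def cf_def fed_def)
qed

lemma xl_agree:
  assumes "agree (Loc t i k) \<xi> \<xi>'" "i < N"
  shows "xl \<xi> t i k = xl \<xi>' t i k"
proof -
  have "agree (Pre t) \<xi> \<xi>'" using assms(1) by (rule agree_mono) (auto simp: Loc_def)
  note e = fed_agree[OF this]
  show ?thesis unfolding xl_def e(1) e(2)[OF assms(2)]
    using assms(1) by (intro local_pt_cong) (auto simp: agree_def Loc_def)
qed

lemma zeta_agree:
  assumes "agree (Loc t i k \<union> {(t, i, k, b)}) \<xi> \<xi>'" "i < N"
  shows "zeta \<xi> t i k b = zeta \<xi>' t i k b"
proof -
  have "xl \<xi> t i k = xl \<xi>' t i k" using assms by (intro xl_agree) (auto elim: agree_mono)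
  moreover have "\<xi> t i k b = \<xi>' t i k b" using assms(1) by (auto simp: agree_def)
  ultimately show ?thesis by (simp add: zeta_def)
qed

lemma agree_cur: "agree J (Xw \<omega>) (cur (UJ J \<omega>))"
  by (simp add: agree_def Xw_def cur_def UJ_def XI_def)

lemma MS_cur: "S \<subseteq> J \<Longrightarrow> MS (PiM J DD) cur S"
  unfolding MS_def cur_def
proof (intro allI impI)
  fix s i k b assume "S \<subseteq> J" "(s, i, k, b) \<in> S"
  then have "(s, i, k, b) \<in> J" by auto
  from measurable_component_singleton[OF this, of DD] show "(\<lambda>u. u (s, i, k, b)) \<in> PiM J DD \<rightarrow>\<^sub>M D i"
    by (simp add: DD_def)
qed

lemma Pre_Idx: "Pre t \<subseteq> Idx" by (auto simp: Pre_def Idx_def)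
lemma Loc_sub: "k \<le> K \<Longrightarrow> i < N \<Longrightarrow> Loc t i k \<subseteq> Pre (Suc t)" by (auto simp: Loc_def Pre_def)
lemma Loc_Idx: "k \<le> K \<Longrightarrow> i < N \<Longrightarrow> Loc t i k \<subseteq> Idx" unfolding Loc_def Pre_def Idx_def by auto

definition Jt where "Jt t i k b = Pre (Suc t) - {(t, i, k, b)}"

lemma Jt_Idx: "Jt t i k b \<subseteq> Idx" using Pre_Idx by (auto simp: Jt_def)

lemma Loc_Jt: "k \<le> K \<Longrightarrow> i < N \<Longrightarrow> Loc t i k \<subseteq> Jt t i k b" by (auto simp: Loc_def Pre_def Jt_def)

lemma zeta_rep:
  assumes "i < N" "k < K" "b < B"
  shows "zeta (Xw \<omega>) t i k b = gF i (xl (cur (UJ (Jt t i k b) \<omega>)) t i k) (X t i k b \<omega>)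
      - gradf i (xl (cur (UJ (Jt t i k b) \<omega>)) t i k)"
proof -
  have "xl (Xw \<omega>) t i k = xl (cur (UJ (Jt t i k b) \<omega>)) t i k"
    using assms by (intro xl_agree agree_mono[OF agree_cur] Loc_Jt) auto
  then show ?thesis by (simp add: zeta_def Xw_def)
qed

lemma meas_xu:
  assumes "i < N" "k < K" "b < B"
  shows "(\<lambda>u. xl (cur u) t i k) \<in> borel_measurable (PiM (Jt t i k b) DD)"
  using assms by (intro meas_xl MS_cur Loc_Jt) auto

lemma meas_gF_pair:
  assumes "i < N" "k < K" "b < B"
  shows "(\<lambda>p. gF i (xl (cur (fst p)) t i k) (snd p) - gradf i (xl (cur (fst p)) t i k)) \<in> borel_measurable (PiM (Jt t i k b) DD \<Otimes>\<^sub>M D i)"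
proof -
  have x: "(\<lambda>p. xl (cur (fst p)) t i k) \<in> borel_measurable (PiM (Jt t i k b) DD \<Otimes>\<^sub>M D i)"
    by (rule measurable_compose[OF measurable_fst meas_xu[OF assms]])
  show ?thesis
    using meas_gF[OF assms(1) x measurable_snd] borel_measurable_continuous_on[OF gradf_cont[OF assms(1)] x]
    by (intro borel_measurable_diff) auto
qed

lemma meas_zeta_M: "i < N \<Longrightarrow> k < K \<Longrightarrow> b < B \<Longrightarrow> (\<lambda>\<omega>. zeta (Xw \<omega>) t i k b) \<in> borel_measurable M"
  by (intro meas_zeta MS_M) (auto simp: Loc_def Pre_def Idx_def)

lemma zeta_var:
  assumes i: "i < N" and k: "k < K" and b: "b < B"
  shows "integrable M (\<lambda>\<omega>. (norm (zeta (Xw \<omega>) t i k b))\<^sup>2)"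
    and "(\<integral>\<omega>. (norm (zeta (Xw \<omega>) t i k b))\<^sup>2 \<partial>M) \<le> \<sigma>\<^sup>2"
proof -
  define J where "J = Jt t i k b"
  interpret Di: prob_space "D i" using Dprob[OF i] .
  interpret PJ: prob_space "PU J" using PU_prob[OF Jt_Idx] unfolding J_def .
  define F where "F = (\<lambda>p. ennreal ((norm (gF i (xl (cur (fst p)) t i k) (snd p) - gradf i (xl (cur (fst p)) t i k)))\<^sup>2))"
  have Fm: "F \<in> borel_measurable (PiM J DD \<Otimes>\<^sub>M D i)"
    unfolding F_def J_def using meas_gF_pair[OF i k b] by measurable
  have a: "(t, i, k, b) \<in> Idx" using i k b by (simp add: Idx_def)
  have aJ: "(t, i, k, b) \<notin> J" by (simp add: J_def Jt_def)
  have fm: "(\<lambda>\<omega>. (norm (zeta (Xw \<omega>) t i k b))\<^sup>2) \<in> borel_measurable M"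
    using meas_zeta_M[OF i k b] by measurable
  have "(\<integral>\<^sup>+\<omega>. ennreal ((norm (zeta (Xw \<omega>) t i k b))\<^sup>2) \<partial>M) = (\<integral>\<^sup>+\<omega>. F (UJ J \<omega>, X t i k b \<omega>) \<partial>M)"
    unfolding F_def using zeta_rep[OF i k b] by (simp add: J_def)
  also have "\<dots> = (\<integral>\<^sup>+u. \<integral>\<^sup>+w. F (u, w) \<partial>D i \<partial>PU J)"
    by (rule split_nn[OF a _ aJ Fm]) (simp add: J_def Jt_Idx)
  also have "\<dots> \<le> (\<integral>\<^sup>+u. ennreal (\<sigma>\<^sup>2) \<partial>PU J)"
  proof (rule nn_integral_mono)
    fix u
    define x where "x = xl (cur u) t i k"
    have "(\<integral>\<^sup>+w. F (u, w) \<partial>D i) = (\<integral>\<^sup>+w. ennreal ((norm (gF i x w - gradf i x))\<^sup>2) \<partial>D i)"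
      by (simp add: F_def x_def)
    also have "\<dots> = ennreal (\<integral>w. (norm (gF i x w - gradf i x))\<^sup>2 \<partial>D i)"
      using A4_var i by (intro nn_integral_eq_integral) auto
    also have "\<dots> \<le> ennreal (\<sigma>\<^sup>2)" using A4_var i by (intro ennreal_leI) auto
    finally show "(\<integral>\<^sup>+w. F (u, w) \<partial>D i) \<le> ennreal (\<sigma>\<^sup>2)" .
  qed
  also have "\<dots> = ennreal (\<sigma>\<^sup>2)" by (simp add: PJ.emeasure_space_1)
  finally have nn: "(\<integral>\<^sup>+\<omega>. ennreal ((norm (zeta (Xw \<omega>) t i k b))\<^sup>2) \<partial>M) \<le> ennreal (\<sigma>\<^sup>2)" .
  show int: "integrable M (\<lambda>\<omega>. (norm (zeta (Xw \<omega>) t i k b))\<^sup>2)"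
    using nn by (intro integrableI_nonneg fm) (auto simp: top.not_eq_extremum intro: le_less_trans)
  have "ennreal (\<integral>\<omega>. (norm (zeta (Xw \<omega>) t i k b))\<^sup>2 \<partial>M) = (\<integral>\<^sup>+\<omega>. ennreal ((norm (zeta (Xw \<omega>) t i k b))\<^sup>2) \<partial>M)"
    using int by (intro nn_integral_eq_integral[symmetric]) auto
  with nn have "ennreal (\<integral>\<omega>. (norm (zeta (Xw \<omega>) t i k b))\<^sup>2 \<partial>M) \<le> ennreal (\<sigma>\<^sup>2)" by simp
  then show "(\<integral>\<omega>. (norm (zeta (Xw \<omega>) t i k b))\<^sup>2 \<partial>M) \<le> \<sigma>\<^sup>2"
    by (subst (asm) ennreal_le_iff) auto
qed

end

lemma inner_le_sq: fixes x y :: "'a::real_inner" shows "\<bar>x \<bullet> y\<bar> \<le> (norm x)\<^sup>2 + (norm y)\<^sup>2"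
proof -
  have "\<bar>x \<bullet> y\<bar> \<le> norm x * norm y" by (rule Cauchy_Schwarz_ineq2)
  also have "\<dots> \<le> (norm x)\<^sup>2 + (norm y)\<^sup>2"
  proof -
    have "0 \<le> (norm x - norm y)\<^sup>2" by simp
    moreover have "(norm x - norm y)\<^sup>2 = (norm x)\<^sup>2 - 2 * (norm x * norm y) + (norm y)\<^sup>2" by (simp add: power2_diff)
    moreover have "norm x * norm y \<ge> 0" by simp
    ultimately show ?thesis by linarith
  qed
  finally show ?thesis .
qed

context fcB
begin

lemma zeta_orth:
  assumes i: "i < N" and k: "k < K" and b: "b < B"
    and Pm: "Psi \<in> borel_measurable (PiM (Jt t i k b) DD)"
    and Pi: "integrable M (\<lambda>\<omega>. (norm (Psi (UJ (Jt t i k b) \<omega>)))\<^sup>2)"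
  shows "integrable M (\<lambda>\<omega>. zeta (Xw \<omega>) t i k b \<bullet> Psi (UJ (Jt t i k b) \<omega>))"
    and "(\<integral>\<omega>. zeta (Xw \<omega>) t i k b \<bullet> Psi (UJ (Jt t i k b) \<omega>) \<partial>M) = 0"
proof -
  define J where "J = Jt t i k b"
  interpret Di: prob_space "D i" using Dprob[OF i] .
  interpret PJ: prob_space "PU J" using PU_prob[OF Jt_Idx] unfolding J_def .
  have Wm: "(\<lambda>\<omega>. Psi (UJ J \<omega>)) \<in> borel_measurable M"
    using measurable_compose[OF UJ_meas[OF Jt_Idx] Pm] by (simp add: J_def)
  have Zm: "(\<lambda>\<omega>. zeta (Xw \<omega>) t i k b) \<in> borel_measurable M" using meas_zeta_M[OF i k b] .
  show int: "integrable M (\<lambda>\<omega>. zeta (Xw \<omega>) t i k b \<bullet> Psi (UJ (Jt t i k b) \<omega>))"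
  proof (rule Bochner_Integration.integrable_bound[where f="\<lambda>\<omega>. (norm (zeta (Xw \<omega>) t i k b))\<^sup>2 + (norm (Psi (UJ (Jt t i k b) \<omega>)))\<^sup>2"])
    show "integrable M (\<lambda>\<omega>. (norm (zeta (Xw \<omega>) t i k b))\<^sup>2 + (norm (Psi (UJ (Jt t i k b) \<omega>)))\<^sup>2)"
      using zeta_var(1)[OF i k b] Pi by (intro Bochner_Integration.integrable_add)
    show "(\<lambda>\<omega>. zeta (Xw \<omega>) t i k b \<bullet> Psi (UJ (Jt t i k b) \<omega>)) \<in> borel_measurable M"
      using Zm Wm unfolding J_def by (intro borel_measurable_inner)
    show "AE \<omega> in M. norm (zeta (Xw \<omega>) t i k b \<bullet> Psi (UJ (Jt t i k b) \<omega>))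
        \<le> norm ((norm (zeta (Xw \<omega>) t i k b))\<^sup>2 + (norm (Psi (UJ (Jt t i k b) \<omega>)))\<^sup>2)"
      using inner_le_sq by (intro AE_I2) (simp add: abs_of_nonneg)
  qed
  define F where "F = (\<lambda>p. (gF i (xl (cur (fst p)) t i k) (snd p) - gradf i (xl (cur (fst p)) t i k)) \<bullet> Psi (fst p))"
  have Fm: "F \<in> borel_measurable (PiM J DD \<Otimes>\<^sub>M D i)"
    unfolding F_def J_def
    using meas_gF_pair[OF i k b] measurable_compose[OF measurable_fst Pm]
    by (intro borel_measurable_inner) auto
  have a: "(t, i, k, b) \<in> Idx" using i k b by (simp add: Idx_def)
  have aJ: "(t, i, k, b) \<notin> J" by (simp add: J_def Jt_def)
  have eq: "\<And>\<omega>. zeta (Xw \<omega>) t i k b \<bullet> Psi (UJ J \<omega>) = F (UJ J \<omega>, X t i k b \<omega>)"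
    unfolding F_def using zeta_rep[OF i k b] by (simp add: J_def)
  have "(\<integral>\<omega>. zeta (Xw \<omega>) t i k b \<bullet> Psi (UJ J \<omega>) \<partial>M) = (\<integral>\<omega>. F (UJ J \<omega>, X t i k b \<omega>) \<partial>M)"
    by (simp add: eq)
  also have "\<dots> = (\<integral>u. \<integral>w. F (u, w) \<partial>D i \<partial>PU J)"
  proof -
    have intJ: "integrable M (\<lambda>\<omega>. zeta (Xw \<omega>) t i k b \<bullet> Psi (UJ J \<omega>))" using int by (simp add: J_def)
    have intF: "integrable M (\<lambda>\<omega>. F (UJ J \<omega>, X t i k b \<omega>))" using intJ unfolding eq .
    have JI: "J \<subseteq> Idx" by (simp add: J_def Jt_Idx)
    show ?thesis by (rule split_int[OF a JI aJ Fm intF])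
  qed
  also have "\<dots> = (\<integral>u. 0 \<partial>PU J)"
  proof (rule Bochner_Integration.integral_cong)
    show "PU J = PU J" by simp
  next
    fix u
    define x where "x = xl (cur u) t i k"
    have gi: "integrable (D i) (gF i x)" using A4_unbiased i by auto
    have "(\<integral>w. F (u, w) \<partial>D i) = (\<integral>w. (gF i x w - gradf i x) \<bullet> Psi u \<partial>D i)"
      by (simp add: F_def x_def)
    also have "\<dots> = (\<integral>w. (gF i x w - gradf i x) \<partial>D i) \<bullet> Psi u"
      using gi by (intro integral_inner_left) auto
    also have "(\<integral>w. (gF i x w - gradf i x) \<partial>D i) = (\<integral>w. gF i x w \<partial>D i) - (\<integral>w. gradf i x \<partial>D i)"
      using gi by (intro Bochner_Integration.integral_diff) auto
    also have "\<dots> = 0" using A4_unbiased i by (simp add: Di.prob_space)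
    finally show "(\<integral>w. F (u, w) \<partial>D i) = 0" by simp
  qed
  also have "\<dots> = 0" by simp
  finally show "(\<integral>\<omega>. zeta (Xw \<omega>) t i k b \<bullet> Psi (UJ (Jt t i k b) \<omega>) \<partial>M) = 0" by (simp add: J_def)
qed

lemma zeta_pair0:
  assumes i: "i < N" and k: "k < K" and b: "b < B" and k': "k' \<le> k" and b': "b' < B"
    and ne: "(k', b') \<noteq> (k, b)"
  shows "integrable M (\<lambda>\<omega>. zeta (Xw \<omega>) t i k b \<bullet> zeta (Xw \<omega>) t i k' b')"
    and "(\<integral>\<omega>. zeta (Xw \<omega>) t i k b \<bullet> zeta (Xw \<omega>) t i k' b' \<partial>M) = 0"
proof -
  define J where "J = Jt t i k b"
  define Psi where "Psi = (\<lambda>u. zeta (cur u) t i k' b')"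
  have k'K: "k' < K" using k k' by simp
  have sub: "Loc t i k' \<union> {(t, i, k', b')} \<subseteq> J"
    using k k' b' ne k'K i unfolding J_def Jt_def Loc_def Pre_def by auto
  have rep: "\<And>\<omega>. zeta (Xw \<omega>) t i k' b' = Psi (UJ J \<omega>)"
    unfolding Psi_def using i by (intro zeta_agree agree_mono[OF agree_cur sub])
  have Pm: "Psi \<in> borel_measurable (PiM (Jt t i k b) DD)"
    unfolding Psi_def using i sub unfolding J_def by (intro meas_zeta MS_cur)
  have Pi: "integrable M (\<lambda>\<omega>. (norm (Psi (UJ (Jt t i k b) \<omega>)))\<^sup>2)"
  proof -
    have "integrable M (\<lambda>\<omega>. (norm (zeta (Xw \<omega>) t i k' b'))\<^sup>2)" by (rule zeta_var(1)[OF i k'K b'])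
    then show ?thesis by (simp only: rep J_def)
  qed
  show "integrable M (\<lambda>\<omega>. zeta (Xw \<omega>) t i k b \<bullet> zeta (Xw \<omega>) t i k' b')"
    using zeta_orth(1)[OF i k b Pm Pi] rep unfolding J_def by simp
  show "(\<integral>\<omega>. zeta (Xw \<omega>) t i k b \<bullet> zeta (Xw \<omega>) t i k' b' \<partial>M) = 0"
    using zeta_orth(2)[OF i k b Pm Pi] rep unfolding J_def by simp
qed

lemma zeta_pair:
  assumes i: "i < N" and p: "fst p < K" "snd p < B" and q: "fst q < K" "snd q < B" and ne: "p \<noteq> q"
  shows "integrable M (\<lambda>\<omega>. zeta (Xw \<omega>) t i (fst p) (snd p) \<bullet> zeta (Xw \<omega>) t i (fst q) (snd q))"
    and "(\<integral>\<omega>. zeta (Xw \<omega>) t i (fst p) (snd p) \<bullet> zeta (Xw \<omega>) t i (fst q) (snd q) \<partial>M) = 0"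
proof -
  obtain k b where pe: "p = (k, b)" by (cases p)
  obtain k' b' where qe: "q = (k', b')" by (cases q)
  have "integrable M (\<lambda>\<omega>. zeta (Xw \<omega>) t i k b \<bullet> zeta (Xw \<omega>) t i k' b')
     \<and> (\<integral>\<omega>. zeta (Xw \<omega>) t i k b \<bullet> zeta (Xw \<omega>) t i k' b' \<partial>M) = 0"
  proof (cases "k' \<le> k")
    case True
    then show ?thesis using zeta_pair0[OF i, of k b k' b'] p q ne pe qe by auto
  next
    case False
    then have "k \<le> k'" by simp
    then have "integrable M (\<lambda>\<omega>. zeta (Xw \<omega>) t i k' b' \<bullet> zeta (Xw \<omega>) t i k b)
     \<and> (\<integral>\<omega>. zeta (Xw \<omega>) t i k' b' \<bullet> zeta (Xw \<omega>) t i k b \<partial>M) = 0"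
      using zeta_pair0[OF i, of k' b' k b] p q ne pe qe by auto
    then show ?thesis by (simp add: inner_commute)
  qed
  then show "integrable M (\<lambda>\<omega>. zeta (Xw \<omega>) t i (fst p) (snd p) \<bullet> zeta (Xw \<omega>) t i (fst q) (snd q))"
    and "(\<integral>\<omega>. zeta (Xw \<omega>) t i (fst p) (snd p) \<bullet> zeta (Xw \<omega>) t i (fst q) (snd q) \<partial>M) = 0"
    using pe qe by auto
qed

lemma zeta_sum:
  assumes i: "i < N" and kk: "kk \<le> K"
  shows "integrable M (\<lambda>\<omega>. (norm (\<Sum>j<kk. \<Sum>b<B. zeta (Xw \<omega>) t i j b))\<^sup>2)"
    and "(\<integral>\<omega>. (norm (\<Sum>j<kk. \<Sum>b<B. zeta (Xw \<omega>) t i j b))\<^sup>2 \<partial>M) \<le> real kk * real B * \<sigma>\<^sup>2"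
proof -
  define P where "P = {..<kk} \<times> {..<B}"
  define Z where "Z = (\<lambda>p \<omega>. zeta (Xw \<omega>) t i (fst p) (snd p))"
  have fin: "finite P" by (simp add: P_def)
  have Pr: "\<And>p. p \<in> P \<Longrightarrow> fst p < K \<and> snd p < B" using kk by (auto simp: P_def)
  have sumeq: "\<And>\<omega>. (\<Sum>j<kk. \<Sum>b<B. zeta (Xw \<omega>) t i j b) = (\<Sum>p\<in>P. Z p \<omega>)"
    unfolding P_def Z_def by (simp add: sum.cartesian_product case_prod_beta)
  have sq: "\<And>\<omega>. (norm (\<Sum>p\<in>P. Z p \<omega>))\<^sup>2 = (\<Sum>p\<in>P. \<Sum>q\<in>P. Z p \<omega> \<bullet> Z q \<omega>)"
    by (simp only: power2_norm_eq_inner inner_sum_left) (simp only: inner_sum_right)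
  have intpq: "integrable M (\<lambda>\<omega>. Z p \<omega> \<bullet> Z q \<omega>)" if "p \<in> P" "q \<in> P" for p q
  proof (cases "p = q")
    case True
    then show ?thesis using zeta_var(1)[OF i, of "fst q" "snd q" t] Pr[OF that(2)]
      by (simp add: Z_def power2_norm_eq_inner)
  next
    case False
    then show ?thesis using zeta_pair(1)[OF i, of p q t] Pr[OF that(1)] Pr[OF that(2)] by (simp add: Z_def)
  qed
  show int: "integrable M (\<lambda>\<omega>. (norm (\<Sum>j<kk. \<Sum>b<B. zeta (Xw \<omega>) t i j b))\<^sup>2)"
    unfolding sumeq sq using intpq by (intro Bochner_Integration.integrable_sum) auto
  have intq: "integrable M (\<lambda>\<omega>. \<Sum>q\<in>P. Z p \<omega> \<bullet> Z q \<omega>)" if "p \<in> P" for p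
    using intpq[OF that] by (intro Bochner_Integration.integrable_sum) auto
  have "(\<integral>\<omega>. (norm (\<Sum>j<kk. \<Sum>b<B. zeta (Xw \<omega>) t i j b))\<^sup>2 \<partial>M) = (\<integral>\<omega>. (\<Sum>p\<in>P. \<Sum>q\<in>P. Z p \<omega> \<bullet> Z q \<omega>) \<partial>M)"
    unfolding sumeq sq ..
  also have "\<dots> = (\<Sum>p\<in>P. \<integral>\<omega>. (\<Sum>q\<in>P. Z p \<omega> \<bullet> Z q \<omega>) \<partial>M)"
    using intq by (rule Bochner_Integration.integral_sum)
  also have "\<dots> = (\<Sum>p\<in>P. \<Sum>q\<in>P. \<integral>\<omega>. Z p \<omega> \<bullet> Z q \<omega> \<partial>M)"
  proof (rule sum.cong[OF refl])
    fix p assume "p \<in> P"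
    then show "(\<integral>\<omega>. (\<Sum>q\<in>P. Z p \<omega> \<bullet> Z q \<omega>) \<partial>M) = (\<Sum>q\<in>P. \<integral>\<omega>. Z p \<omega> \<bullet> Z q \<omega> \<partial>M)"
      using intpq by (intro Bochner_Integration.integral_sum) auto
  qed
  also have "\<dots> = (\<Sum>p\<in>P. \<integral>\<omega>. Z p \<omega> \<bullet> Z p \<omega> \<partial>M)"
  proof (rule sum.cong[OF refl])
    fix p assume p: "p \<in> P"
    have "(\<Sum>q\<in>P. \<integral>\<omega>. Z p \<omega> \<bullet> Z q \<omega> \<partial>M) = (\<Sum>q\<in>P. if q = p then \<integral>\<omega>. Z p \<omega> \<bullet> Z p \<omega> \<partial>M else 0)"
    proof (rule sum.cong[OF refl])
      fix q assume q: "q \<in> P"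
      show "(\<integral>\<omega>. Z p \<omega> \<bullet> Z q \<omega> \<partial>M) = (if q = p then \<integral>\<omega>. Z p \<omega> \<bullet> Z p \<omega> \<partial>M else 0)"
        using zeta_pair(2)[OF i, of p q t] Pr[OF p] Pr[OF q] by (auto simp: Z_def)
    qed
    also have "\<dots> = (\<integral>\<omega>. Z p \<omega> \<bullet> Z p \<omega> \<partial>M)" using p fin by simp
    finally show "(\<Sum>q\<in>P. \<integral>\<omega>. Z p \<omega> \<bullet> Z q \<omega> \<partial>M) = (\<integral>\<omega>. Z p \<omega> \<bullet> Z p \<omega> \<partial>M)" .
  qed
  also have "\<dots> \<le> (\<Sum>p\<in>P. \<sigma>\<^sup>2)"
  proof (rule sum_mono)
    fix p assume p: "p \<in> P"
    show "(\<integral>\<omega>. Z p \<omega> \<bullet> Z p \<omega> \<partial>M) \<le> \<sigma>\<^sup>2"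
      using zeta_var(2)[OF i, of "fst p" "snd p" t] Pr[OF p] by (simp add: Z_def power2_norm_eq_inner)
  qed
  also have "\<dots> = real kk * real B * \<sigma>\<^sup>2" by (simp add: P_def)
  finally show "(\<integral>\<omega>. (norm (\<Sum>j<kk. \<Sum>b<B. zeta (Xw \<omega>) t i j b))\<^sup>2 \<partial>M) \<le> real kk * real B * \<sigma>\<^sup>2" .
qed

end

lemma norm_add_sq: fixes a b :: "'a::real_normed_vector"
  shows "(norm (a + b))\<^sup>2 \<le> 2 * (norm a)\<^sup>2 + 2 * (norm b)\<^sup>2"
proof -
  have "(norm (a + b))\<^sup>2 \<le> (norm a + norm b)\<^sup>2" by (intro power_mono norm_triangle_ineq) auto
  also have "\<dots> \<le> 2 * (norm a)\<^sup>2 + 2 * (norm b)\<^sup>2"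
  proof -
    have "0 \<le> (norm a - norm b)\<^sup>2" by simp
    then show ?thesis unfolding power2_sum using power2_diff[of "norm a" "norm b"] by linarith
  qed
  finally show ?thesis .
qed

lemma norm_sum_sq: fixes v :: "'i \<Rightarrow> 'a::real_normed_vector"
  shows "(norm (\<Sum>j\<in>S. v j))\<^sup>2 \<le> real (card S) * (\<Sum>j\<in>S. (norm (v j))\<^sup>2)"
proof -
  have "(norm (\<Sum>j\<in>S. v j))\<^sup>2 \<le> (\<Sum>j\<in>S. norm (v j))\<^sup>2" by (intro power_mono norm_sum) auto
  also have "\<dots> \<le> (\<Sum>j\<in>S. (norm (v j))\<^sup>2) * card S" by (rule sum_squared_le_sum_of_squares)
  finally show ?thesis by (simp add: mult.commute)
qed

lemma norm_add3_sq: fixes a b c :: "'a::real_normed_vector"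
  shows "(norm (a + b + c))\<^sup>2 \<le> 3 * ((norm a)\<^sup>2 + (norm b)\<^sup>2 + (norm c)\<^sup>2)"
proof -
  have "(norm (a + b + c))\<^sup>2 = (norm (\<Sum>j\<in>{0::nat,1,2}. [a, b, c] ! j))\<^sup>2" by (simp add: add.assoc)
  also have "\<dots> \<le> real (card {0::nat,1,2}) * (\<Sum>j\<in>{0::nat,1,2}. (norm ([a, b, c] ! j))\<^sup>2)" by (rule norm_sum_sq)
  also have "\<dots> = 3 * ((norm a)\<^sup>2 + (norm b)\<^sup>2 + (norm c)\<^sup>2)" by (simp add: add.assoc)
  finally show ?thesis .
qed

lemma sgrad_split: "B > 0 \<Longrightarrow> sgrad gF B i x s = (1 / real B) *\<^sub>R (\<Sum>b<B. (gF i x (s b) - g)) + g"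
  unfolding sgrad_def by (simp add: sum_subtractf scaleR_diff_right sum_constant_scaleR)

lemma local_unroll: "local_pt gF B \<beta> c i z s k = z - \<beta> *\<^sub>R (\<Sum>j<k. (sgrad gF B i (local_pt gF B \<beta> c i z s j) (s j) + c))"
  by (induction k) (simp_all add: algebra_simps)

context fcB
begin

definition gfbar where "gfbar x = (1 / real N) *\<^sub>R (\<Sum>i<N. gradf i x)"

lemma xl_unroll:
  "xl \<xi> t i k - zf \<xi> t = - \<beta> *\<^sub>R ((1 / real B) *\<^sub>R (\<Sum>j<k. \<Sum>b<B. zeta \<xi> t i j b)
      + (\<Sum>j<k. (gradf i (xl \<xi> t i j) - gradf i (zf \<xi> t))) + real k *\<^sub>R (gradf i (zf \<xi> t) + cf \<xi> t i))"
proof -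
  define z where "z = zf \<xi> t"
  define c where "c = cf \<xi> t i"
  have "(\<Sum>j<k. (sgrad gF B i (xl \<xi> t i j) (\<xi> t i j) + c))
      = (\<Sum>j<k. ((1 / real B) *\<^sub>R (\<Sum>b<B. zeta \<xi> t i j b) + (gradf i (xl \<xi> t i j) - gradf i z) + (gradf i z + c)))"
  proof (rule sum.cong[OF refl])
    fix j
    show "sgrad gF B i (xl \<xi> t i j) (\<xi> t i j) + c = (1 / real B) *\<^sub>R (\<Sum>b<B. zeta \<xi> t i j b) + (gradf i (xl \<xi> t i j) - gradf i z) + (gradf i z + c)"
      using sgrad_split[OF B_pos, of gF i "xl \<xi> t i j" "\<xi> t i j" "gradf i (xl \<xi> t i j)"]
      by (simp add: zeta_def)
  qed
  also have "\<dots> = (1 / real B) *\<^sub>R (\<Sum>j<k. \<Sum>b<B. zeta \<xi> t i j b) + (\<Sum>j<k. (gradf i (xl \<xi> t i j) - gradf i z)) + real k *\<^sub>R (gradf i z + c)"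
    by (simp add: sum.distrib scaleR_sum_right sum_subtractf sum_constant_scaleR scaleR_add_right)
  finally have e: "(\<Sum>j<k. (sgrad gF B i (xl \<xi> t i j) (\<xi> t i j) + c)) = (1 / real B) *\<^sub>R (\<Sum>j<k. \<Sum>b<B. zeta \<xi> t i j b) + (\<Sum>j<k. (gradf i (xl \<xi> t i j) - gradf i z)) + real k *\<^sub>R (gradf i z + c)" .
  have "xl \<xi> t i k = z - \<beta> *\<^sub>R (\<Sum>j<k. (sgrad gF B i (xl \<xi> t i j) (\<xi> t i j) + c))"
    unfolding xl_def z_def c_def by (subst local_unroll) simp
  then show ?thesis unfolding e by (simp add: z_def c_def)
qed

lemma delta_eq:
  "fc_delta gF B \<beta> K (cf \<xi> t i) i (zf \<xi> t) (\<xi> t i) - gradf i (zf \<xi> t) - cf \<xi> t i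
    = (1 / (real K * real B)) *\<^sub>R (\<Sum>j<K. \<Sum>b<B. zeta \<xi> t i j b) + (1 / real K) *\<^sub>R (\<Sum>j<K. (gradf i (xl \<xi> t i j) - gradf i (zf \<xi> t)))"
proof -
  have "zf \<xi> t - xl \<xi> t i K = \<beta> *\<^sub>R ((1 / real B) *\<^sub>R (\<Sum>j<K. \<Sum>b<B. zeta \<xi> t i j b)
      + (\<Sum>j<K. (gradf i (xl \<xi> t i j) - gradf i (zf \<xi> t))) + real K *\<^sub>R (gradf i (zf \<xi> t) + cf \<xi> t i))"
    using xl_unroll[of \<xi> t i K] by (simp add: algebra_simps)
  then have "fc_delta gF B \<beta> K (cf \<xi> t i) i (zf \<xi> t) (\<xi> t i) = (1 / real K) *\<^sub>R ((1 / real B) *\<^sub>R (\<Sum>j<K. \<Sum>b<B. zeta \<xi> t i j b)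
      + (\<Sum>j<K. (gradf i (xl \<xi> t i j) - gradf i (zf \<xi> t))) + real K *\<^sub>R (gradf i (zf \<xi> t) + cf \<xi> t i))"
    unfolding fc_delta_def xl_def[symmetric] using beta_pos by simp
  then show ?thesis using K_pos by (simp add: algebra_simps)
qed

lemma csum: "(\<Sum>i<N. cf \<xi> t i) = 0"
proof (induction t)
  case 0 then show ?case using c0_sum by (simp add: cf_def fed_def)
next
  case (Suc t)
  define st where "st = fed \<xi> t"
  define Db where "Db = fc_Dbar gF B \<beta> K N st (\<xi> t)"
  have e: "cf \<xi> (Suc t) i = cf \<xi> t i + Db - fc_delta gF B \<beta> K (cf \<xi> t i) i (zf \<xi> t) (\<xi> t i)" for i
    by (simp add: cf_def zf_def fed_def Let_def Db_def st_def)
  have "(\<Sum>i<N. cf \<xi> (Suc t) i) = (\<Sum>i<N. cf \<xi> t i) + real N *\<^sub>R Db - (\<Sum>i<N. fc_delta gF B \<beta> K (cf \<xi> t i) i (zf \<xi> t) (\<xi> t i))"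
    unfolding e by (simp add: sum.distrib sum_subtractf sum_constant_scaleR)
  also have "real N *\<^sub>R Db = (\<Sum>i<N. fc_delta gF B \<beta> K (cf \<xi> t i) i (zf \<xi> t) (\<xi> t i))"
    using N_pos by (simp add: Db_def fc_Dbar_def st_def cf_def zf_def sum_constant_scaleR)
  finally show ?case using Suc by simp
qed

lemma Dbar_eq:
  "fc_Dbar gF B \<beta> K N (fed \<xi> t) (\<xi> t) - gfbar (zf \<xi> t)
    = (1 / real N) *\<^sub>R (\<Sum>i<N. (fc_delta gF B \<beta> K (cf \<xi> t i) i (zf \<xi> t) (\<xi> t i) - gradf i (zf \<xi> t) - cf \<xi> t i))"
  using csum[of \<xi> t]
  by (simp add: fc_Dbar_def gfbar_def sum_subtractf cf_def zf_def scaleR_diff_right)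

definition SQ where "SQ f \<longleftrightarrow> f \<in> borel_measurable M \<and> integrable M (\<lambda>\<omega>. (norm (f \<omega>))\<^sup>2)"

lemma SQ_int: "SQ f \<Longrightarrow> integrable M (\<lambda>\<omega>. (norm (f \<omega>))\<^sup>2)" by (simp add: SQ_def)
lemma SQ_meas: "SQ f \<Longrightarrow> f \<in> borel_measurable M" by (simp add: SQ_def)

lemma SQ_add: fixes f q :: "'w \<Rightarrow> 'a" assumes "SQ f" "SQ q" shows "SQ (\<lambda>\<omega>. f \<omega> + q \<omega>)"
  unfolding SQ_def
proof
  show m: "(\<lambda>\<omega>. f \<omega> + q \<omega>) \<in> borel_measurable M" using assms unfolding SQ_def by (intro borel_measurable_add) auto
  show "integrable M (\<lambda>\<omega>. (norm (f \<omega> + q \<omega>))\<^sup>2)"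
  proof (rule Bochner_Integration.integrable_bound[where f="\<lambda>\<omega>. 2 * (norm (f \<omega>))\<^sup>2 + 2 * (norm (q \<omega>))\<^sup>2"])
    show "integrable M (\<lambda>\<omega>. 2 * (norm (f \<omega>))\<^sup>2 + 2 * (norm (q \<omega>))\<^sup>2)" using assms by (auto simp: SQ_def)
    show "(\<lambda>\<omega>. (norm (f \<omega> + q \<omega>))\<^sup>2) \<in> borel_measurable M" using m by measurable
    show "AE \<omega> in M. norm ((norm (f \<omega> + q \<omega>))\<^sup>2) \<le> norm (2 * (norm (f \<omega>))\<^sup>2 + 2 * (norm (q \<omega>))\<^sup>2)"
      using norm_add_sq by (intro AE_I2) (simp add: abs_of_nonneg)
  qed
qed

lemma SQ_scale: fixes f :: "'w \<Rightarrow> 'a" assumes "SQ f" shows "SQ (\<lambda>\<omega>. c *\<^sub>R f \<omega>)"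
  using assms unfolding SQ_def by (simp add: power_mult_distrib borel_measurable_scaleR)

lemma SQ_uminus: fixes f :: "'w \<Rightarrow> 'a" assumes "SQ f" shows "SQ (\<lambda>\<omega>. - f \<omega>)"
  using SQ_scale[OF assms, of "-1"] by simp

lemma SQ_diff: fixes f q :: "'w \<Rightarrow> 'a" assumes "SQ f" "SQ q" shows "SQ (\<lambda>\<omega>. f \<omega> - q \<omega>)"
  using SQ_add[OF assms(1) SQ_uminus[OF assms(2)]] by simp

lemma SQ_const: "SQ (\<lambda>\<omega>. c :: 'a)" unfolding SQ_def by simp

lemma SQ_sum: fixes f :: "_ \<Rightarrow> 'w \<Rightarrow> 'a" shows "finite S \<Longrightarrow> (\<And>j. j \<in> S \<Longrightarrow> SQ (f j)) \<Longrightarrow> SQ (\<lambda>\<omega>. \<Sum>j\<in>S. f j \<omega>)"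
proof (induction S rule: finite_induct)
  case empty then show ?case using SQ_const[of 0] by simp
next
  case (insert x F) then show ?case using SQ_add[of "f x" "\<lambda>\<omega>. \<Sum>j\<in>F. f j \<omega>"] by simp
qed

lemma SQ_lip:
  fixes f :: "'w \<Rightarrow> 'a" and F :: "'a \<Rightarrow> 'a"
  assumes f: "SQ f" and F: "continuous_on UNIV F" and bd: "\<And>x. norm (F x) \<le> A + C * norm x" and C: "C \<ge> 0"
  shows "SQ (\<lambda>\<omega>. F (f \<omega>))"
  unfolding SQ_def
proof
  show m: "(\<lambda>\<omega>. F (f \<omega>)) \<in> borel_measurable M" using borel_measurable_continuous_on[OF F SQ_meas[OF f]] .
  show "integrable M (\<lambda>\<omega>. (norm (F (f \<omega>)))\<^sup>2)"
  proof (rule Bochner_Integration.integrable_bound[where f="\<lambda>\<omega>. 2 * A\<^sup>2 + 2 * C\<^sup>2 * (norm (f \<omega>))\<^sup>2"])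
    show "integrable M (\<lambda>\<omega>. 2 * A\<^sup>2 + 2 * C\<^sup>2 * (norm (f \<omega>))\<^sup>2)" using SQ_int[OF f] by auto
    show "(\<lambda>\<omega>. (norm (F (f \<omega>)))\<^sup>2) \<in> borel_measurable M" using m by measurable
    show "AE \<omega> in M. norm ((norm (F (f \<omega>)))\<^sup>2) \<le> norm (2 * A\<^sup>2 + 2 * C\<^sup>2 * (norm (f \<omega>))\<^sup>2)"
    proof (intro AE_I2)
      fix \<omega>
      have A: "A \<ge> 0" using bd[of 0] norm_ge_zero[of "F 0"] by (simp del: norm_ge_zero)
      have "(norm (F (f \<omega>)))\<^sup>2 \<le> (A + C * norm (f \<omega>))\<^sup>2" using bd by (intro power_mono) auto
      also have "\<dots> \<le> 2 * A\<^sup>2 + 2 * C\<^sup>2 * (norm (f \<omega>))\<^sup>2"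
        using norm_add_sq[of A "C * norm (f \<omega>)"] A C by (simp add: power_mult_distrib)
      finally show "norm ((norm (F (f \<omega>)))\<^sup>2) \<le> norm (2 * A\<^sup>2 + 2 * C\<^sup>2 * (norm (f \<omega>))\<^sup>2)"
        by (simp add: abs_of_nonneg)
    qed
  qed
qed

lemma SQ_inner: fixes f q :: "'w \<Rightarrow> 'a" assumes "SQ f" "SQ q" shows "integrable M (\<lambda>\<omega>. f \<omega> \<bullet> q \<omega>)"
proof (rule Bochner_Integration.integrable_bound[where f="\<lambda>\<omega>. (norm (f \<omega>))\<^sup>2 + (norm (q \<omega>))\<^sup>2"])
  show "integrable M (\<lambda>\<omega>. (norm (f \<omega>))\<^sup>2 + (norm (q \<omega>))\<^sup>2)" using assms by (auto simp: SQ_def)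
  show "(\<lambda>\<omega>. f \<omega> \<bullet> q \<omega>) \<in> borel_measurable M" using assms unfolding SQ_def by (intro borel_measurable_inner) auto
  show "AE \<omega> in M. norm (f \<omega> \<bullet> q \<omega>) \<le> norm ((norm (f \<omega>))\<^sup>2 + (norm (q \<omega>))\<^sup>2)"
    using inner_le_sq by (intro AE_I2) (simp add: abs_of_nonneg)
qed

lemma gradf_bd: "i < N \<Longrightarrow> norm (gradf i x) \<le> norm (gradf i 0) + L * norm x"
  using A2_lip norm_triangle_ineq2[of "gradf i x" "gradf i 0"] by (smt (verit) diff_zero)

lemma prox_bd: "norm (prox \<alpha> h x) \<le> norm (prox \<alpha> h 0) + (1 / (1 - \<alpha> * \<rho>)) * norm x"
  using prox_lip[of x 0] norm_triangle_ineq2[of "prox \<alpha> h x" "prox \<alpha> h 0"] by simp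

lemma SQ_gradf: "i < N \<Longrightarrow> SQ f \<Longrightarrow> SQ (\<lambda>\<omega>. gradf i (f \<omega>))"
  using A2_L by (intro SQ_lip[OF _ gradf_cont gradf_bd]) auto

lemma SQ_prox: "SQ f \<Longrightarrow> SQ (\<lambda>\<omega>. prox \<alpha> h (f \<omega>))"
  using arho by (intro SQ_lip[OF _ prox_cont prox_bd]) auto

end

context fcB
begin

definition Zw where "Zw t \<omega> = zf (Xw \<omega>) t"
definition Cw where "Cw t i \<omega> = cf (Xw \<omega>) t i"
definition xw where "xw t i k \<omega> = xl (Xw \<omega>) t i k"
definition zw where "zw t i k b \<omega> = zeta (Xw \<omega>) t i k b"
definition Dlw where "Dlw t i \<omega> = fc_delta gF B \<beta> K (cf (Xw \<omega>) t i) i (zf (Xw \<omega>) t) (Xw \<omega> t i)"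
definition Dw where "Dw t \<omega> = fc_Dbar gF B \<beta> K N (fed (Xw \<omega>) t) (Xw \<omega> t)"

lemma SQ_zw: "i < N \<Longrightarrow> k < K \<Longrightarrow> b < B \<Longrightarrow> SQ (zw t i k b)"
  unfolding SQ_def zw_def using meas_zeta_M zeta_var(1) by blast

lemma Dw_eq: "Dw t \<omega> = (1 / real N) *\<^sub>R (\<Sum>i<N. Dlw t i \<omega>)"
  by (simp add: Dw_def Dlw_def fc_Dbar_def cf_def zf_def)

lemma Dlw_eq: "Dlw t i \<omega> = (1 / (\<beta> * real K)) *\<^sub>R (Zw t \<omega> - xw t i K \<omega>)"
  by (simp add: Dlw_def fc_delta_def Zw_def xw_def xl_def)

lemma xw_Suc: "xw t i (Suc k) \<omega> = xw t i k \<omega> - \<beta> *\<^sub>R ((1 / real B) *\<^sub>R (\<Sum>b<B. zw t i k b \<omega>) + gradf i (xw t i k \<omega>) + Cw t i \<omega>)"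
proof -
  have "sgrad gF B i (xw t i k \<omega>) (Xw \<omega> t i k) = (1 / real B) *\<^sub>R (\<Sum>b<B. zw t i k b \<omega>) + gradf i (xw t i k \<omega>)"
    using sgrad_split[OF B_pos, of gF i "xw t i k \<omega>" "Xw \<omega> t i k" "gradf i (xw t i k \<omega>)"]
    by (simp add: zw_def zeta_def xw_def)
  then show ?thesis by (simp add: xw_def xl_def Cw_def algebra_simps)
qed

lemma xw_0: "xw t i 0 \<omega> = Zw t \<omega>" by (simp add: xw_def xl_def Zw_def)

lemma SQ_xw:
  assumes Z: "SQ (Zw t)" and C: "SQ (Cw t i)" and i: "i < N"
  shows "k \<le> K \<Longrightarrow> SQ (xw t i k)"
proof (induction k)
  case 0 then show ?case using Z by (simp add: xw_0[abs_def])
next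
  case (Suc k)
  then have k: "k < K" by simp
  have x: "SQ (xw t i k)" using Suc by simp
  have s: "SQ (\<lambda>\<omega>. \<Sum>b<B. zw t i k b \<omega>)" using SQ_zw[OF i k] by (intro SQ_sum) auto
  have "SQ (\<lambda>\<omega>. xw t i k \<omega> - \<beta> *\<^sub>R ((1 / real B) *\<^sub>R (\<Sum>b<B. zw t i k b \<omega>) + gradf i (xw t i k \<omega>) + Cw t i \<omega>))"
    by (intro SQ_diff x SQ_scale SQ_add s SQ_gradf[OF i] C)
  then show ?case by (simp add: xw_Suc[abs_def])
qed

lemma SQ_all: "SQ (Zw t) \<and> (\<forall>i<N. SQ (Cw t i))"
proof (induction t)
  case 0 then show ?case by (simp add: Zw_def Cw_def zf_def cf_def fed_def SQ_const)
next
  case (Suc t)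
  have Z: "SQ (Zw t)" and C: "\<And>i. i < N \<Longrightarrow> SQ (Cw t i)" using Suc by auto
  have Dl: "SQ (Dlw t i)" if i: "i < N" for i
    unfolding Dlw_eq[abs_def] by (intro SQ_scale SQ_diff Z SQ_xw[OF Z C[OF i] i]) simp
  have D: "SQ (Dw t)" unfolding Dw_eq[abs_def] using Dl by (intro SQ_scale SQ_sum) auto
  have "Zw (Suc t) = (\<lambda>\<omega>. prox \<alpha> h (Zw t \<omega> - \<alpha> *\<^sub>R Dw t \<omega>))"
    by (simp add: fun_eq_iff Zw_def Dw_def zf_def fed_def Let_def)
  moreover have "Cw (Suc t) i = (\<lambda>\<omega>. Cw t i \<omega> + Dw t \<omega> - Dlw t i \<omega>)" for i
    by (simp add: fun_eq_iff Cw_def Dw_def Dlw_def cf_def zf_def fed_def Let_def)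
  ultimately show ?case using Z C D Dl
    by (auto intro!: SQ_prox SQ_diff SQ_scale SQ_add)
qed

lemma SQ_Zw: "SQ (Zw t)" using SQ_all by blast
lemma SQ_Cw: "i < N \<Longrightarrow> SQ (Cw t i)" using SQ_all by blast
lemma SQ_xw': "i < N \<Longrightarrow> k \<le> K \<Longrightarrow> SQ (xw t i k)" using SQ_xw SQ_Zw SQ_Cw by blast
lemma SQ_Dlw: "i < N \<Longrightarrow> SQ (Dlw t i)"
  unfolding Dlw_eq[abs_def] by (intro SQ_scale SQ_diff SQ_Zw SQ_xw') auto
lemma SQ_Dw: "SQ (Dw t)"
  unfolding Dw_eq[abs_def] using SQ_Dlw by (intro SQ_scale SQ_sum) auto

end

context fcB
begin

lemma x_minus_Z:
  "xw t i k \<omega> - Zw t \<omega> = - \<beta> *\<^sub>R ((1 / real B) *\<^sub>R (\<Sum>j<k. \<Sum>b<B. zw t i j b \<omega>)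
      + (\<Sum>j<k. (gradf i (xw t i j \<omega>) - gradf i (Zw t \<omega>))) + real k *\<^sub>R (gradf i (Zw t \<omega>) + Cw t i \<omega>))"
  using xl_unroll[of "Xw \<omega>" t i k] by (simp add: xw_def Zw_def zw_def Cw_def)

lemma pw_bound:
  assumes i: "i < N" and k: "k < K"
  shows "(norm (xw t i k \<omega> - Zw t \<omega>))\<^sup>2 \<le> 3 * \<beta>\<^sup>2 * ((1 / real B)\<^sup>2 * (norm (\<Sum>j<k. \<Sum>b<B. zw t i j b \<omega>))\<^sup>2
      + (real K - 1) * L\<^sup>2 * (\<Sum>j<K. (norm (xw t i j \<omega> - Zw t \<omega>))\<^sup>2)
      + (real K - 1)\<^sup>2 * (norm (gradf i (Zw t \<omega>) + Cw t i \<omega>))\<^sup>2)"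
proof -
  define u where "u = (1 / real B) *\<^sub>R (\<Sum>j<k. \<Sum>b<B. zw t i j b \<omega>)"
  define v where "v = (\<Sum>j<k. (gradf i (xw t i j \<omega>) - gradf i (Zw t \<omega>)))"
  define w where "w = real k *\<^sub>R (gradf i (Zw t \<omega>) + Cw t i \<omega>)"
  define SD where "SD = (\<Sum>j<K. (norm (xw t i j \<omega> - Zw t \<omega>))\<^sup>2)"
  have kK: "real k \<le> real K - 1" using k by linarith
  have SD0: "SD \<ge> 0" unfolding SD_def by (intro sum_nonneg) auto
  have e: "(norm (xw t i k \<omega> - Zw t \<omega>))\<^sup>2 = \<beta>\<^sup>2 * (norm (u + v + w))\<^sup>2"
    unfolding x_minus_Z u_def v_def w_def by (simp add: power_mult_distrib)
  have nu: "(norm u)\<^sup>2 = (1 / real B)\<^sup>2 * (norm (\<Sum>j<k. \<Sum>b<B. zw t i j b \<omega>))\<^sup>2"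
    unfolding u_def by (simp add: power_mult_distrib power_divide)
  have nv: "(norm v)\<^sup>2 \<le> (real K - 1) * L\<^sup>2 * SD"
  proof -
    have "(norm v)\<^sup>2 \<le> real (card {..<k}) * (\<Sum>j<k. (norm (gradf i (xw t i j \<omega>) - gradf i (Zw t \<omega>)))\<^sup>2)"
      unfolding v_def by (rule norm_sum_sq)
    also have "\<dots> \<le> real k * (\<Sum>j<k. L\<^sup>2 * (norm (xw t i j \<omega> - Zw t \<omega>))\<^sup>2)"
    proof -
      have "(\<Sum>j<k. (norm (gradf i (xw t i j \<omega>) - gradf i (Zw t \<omega>)))\<^sup>2) \<le> (\<Sum>j<k. L\<^sup>2 * (norm (xw t i j \<omega> - Zw t \<omega>))\<^sup>2)"
      proof (rule sum_mono)
        fix j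
        have "norm (gradf i (xw t i j \<omega>) - gradf i (Zw t \<omega>)) \<le> L * norm (xw t i j \<omega> - Zw t \<omega>)"
          using A2_lip i by auto
        then have "(norm (gradf i (xw t i j \<omega>) - gradf i (Zw t \<omega>)))\<^sup>2 \<le> (L * norm (xw t i j \<omega> - Zw t \<omega>))\<^sup>2"
          by (intro power_mono) auto
        then show "(norm (gradf i (xw t i j \<omega>) - gradf i (Zw t \<omega>)))\<^sup>2 \<le> L\<^sup>2 * (norm (xw t i j \<omega> - Zw t \<omega>))\<^sup>2"
          by (simp add: power_mult_distrib)
      qed
      then show ?thesis by (simp add: mult_left_mono)
    qed
    also have "\<dots> = real k * (L\<^sup>2 * (\<Sum>j<k. (norm (xw t i j \<omega> - Zw t \<omega>))\<^sup>2))"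
      by (simp add: sum_distrib_left)
    also have "\<dots> \<le> (real K - 1) * (L\<^sup>2 * SD)"
    proof (rule mult_mono[OF kK])
      have "(\<Sum>j<k. (norm (xw t i j \<omega> - Zw t \<omega>))\<^sup>2) \<le> SD"
        unfolding SD_def using k by (intro sum_mono2) auto
      then show "L\<^sup>2 * (\<Sum>j<k. (norm (xw t i j \<omega> - Zw t \<omega>))\<^sup>2) \<le> L\<^sup>2 * SD" by (intro mult_left_mono) auto
      show "0 \<le> real K - 1" using k by simp
      show "0 \<le> L\<^sup>2 * (\<Sum>j<k. (norm (xw t i j \<omega> - Zw t \<omega>))\<^sup>2)" by (simp add: sum_nonneg)
    qed
    finally show ?thesis by simp
  qed
  have nw: "(norm w)\<^sup>2 \<le> (real K - 1)\<^sup>2 * (norm (gradf i (Zw t \<omega>) + Cw t i \<omega>))\<^sup>2"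
  proof -
    have "(norm w)\<^sup>2 = (real k)\<^sup>2 * (norm (gradf i (Zw t \<omega>) + Cw t i \<omega>))\<^sup>2"
      unfolding w_def by (simp add: power_mult_distrib)
    also have "\<dots> \<le> (real K - 1)\<^sup>2 * (norm (gradf i (Zw t \<omega>) + Cw t i \<omega>))\<^sup>2"
      using kK by (intro mult_right_mono power_mono) auto
    finally show ?thesis .
  qed
  have "(norm (u + v + w))\<^sup>2 \<le> 3 * ((norm u)\<^sup>2 + (norm v)\<^sup>2 + (norm w)\<^sup>2)" by (rule norm_add3_sq)
  also have "\<dots> \<le> 3 * ((1 / real B)\<^sup>2 * (norm (\<Sum>j<k. \<Sum>b<B. zw t i j b \<omega>))\<^sup>2 + (real K - 1) * L\<^sup>2 * SD
      + (real K - 1)\<^sup>2 * (norm (gradf i (Zw t \<omega>) + Cw t i \<omega>))\<^sup>2)"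
  proof -
    have "(norm u)\<^sup>2 + (norm v)\<^sup>2 + (norm w)\<^sup>2 \<le> (1 / real B)\<^sup>2 * (norm (\<Sum>j<k. \<Sum>b<B. zw t i j b \<omega>))\<^sup>2 + (real K - 1) * L\<^sup>2 * SD
      + (real K - 1)\<^sup>2 * (norm (gradf i (Zw t \<omega>) + Cw t i \<omega>))\<^sup>2"
      using nu nv nw by (intro add_mono) auto
    then show ?thesis by simp
  qed
  finally have "\<beta>\<^sup>2 * (norm (u + v + w))\<^sup>2 \<le> \<beta>\<^sup>2 * (3 * ((1 / real B)\<^sup>2 * (norm (\<Sum>j<k. \<Sum>b<B. zw t i j b \<omega>))\<^sup>2 + (real K - 1) * L\<^sup>2 * SD
      + (real K - 1)\<^sup>2 * (norm (gradf i (Zw t \<omega>) + Cw t i \<omega>))\<^sup>2))"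
    by (intro mult_left_mono) auto
  then show ?thesis unfolding e SD_def by (simp add: algebra_simps)
qed

lemma int_dd: "i < N \<Longrightarrow> k \<le> K \<Longrightarrow> integrable M (\<lambda>\<omega>. (norm (xw t i k \<omega> - Zw t \<omega>))\<^sup>2)"
  using SQ_int[OF SQ_diff[OF SQ_xw' SQ_Zw]] by blast

lemma int_an: "i < N \<Longrightarrow> integrable M (\<lambda>\<omega>. (norm (gradf i (Zw t \<omega>) + Cw t i \<omega>))\<^sup>2)"
  using SQ_int[OF SQ_add[OF SQ_gradf[OF _ SQ_Zw] SQ_Cw]] by blast

lemma nk_int: "i < N \<Longrightarrow> kk \<le> K \<Longrightarrow> integrable M (\<lambda>\<omega>. (norm (\<Sum>j<kk. \<Sum>b<B. zw t i j b \<omega>))\<^sup>2)"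
  using zeta_sum(1) unfolding zw_def by blast

lemma nk_bd: "i < N \<Longrightarrow> kk \<le> K \<Longrightarrow> (\<integral>\<omega>. (norm (\<Sum>j<kk. \<Sum>b<B. zw t i j b \<omega>))\<^sup>2 \<partial>M) \<le> real kk * real B * \<sigma>\<^sup>2"
  using zeta_sum(2) unfolding zw_def by blast

lemma client_S:
  fixes t i :: nat
  assumes i: "i < N"
  defines "S \<equiv> (\<Sum>k<K. \<integral>\<omega>. (norm (xw t i k \<omega> - Zw t \<omega>))\<^sup>2 \<partial>M)"
    and "A \<equiv> (\<integral>\<omega>. (norm (gradf i (Zw t \<omega>) + Cw t i \<omega>))\<^sup>2 \<partial>M)"
  shows "S \<le> 8 / 7 * (3 * \<beta>\<^sup>2 * real K * (real K - 1) * (\<sigma>\<^sup>2 / real B + (real K - 1) * A))"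
proof -
  define T where "T = 3 * \<beta>\<^sup>2 * ((real K - 1) * \<sigma>\<^sup>2 / real B + (real K - 1) * L\<^sup>2 * S + (real K - 1)\<^sup>2 * A)"
  have Bp: "real B > 0" using B_pos by simp
  have sumint: "(\<integral>\<omega>. (\<Sum>j<K. (norm (xw t i j \<omega> - Zw t \<omega>))\<^sup>2) \<partial>M) = S"
    unfolding S_def using int_dd[OF i] by (intro Bochner_Integration.integral_sum) auto
  have sumint': "integrable M (\<lambda>\<omega>. \<Sum>j<K. (norm (xw t i j \<omega> - Zw t \<omega>))\<^sup>2)"
    using int_dd[OF i] by (intro Bochner_Integration.integrable_sum) auto
  have each: "(\<integral>\<omega>. (norm (xw t i k \<omega> - Zw t \<omega>))\<^sup>2 \<partial>M) \<le> T" if k: "k < K" for k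
  proof -
    define n where "n = (\<lambda>\<omega>. (norm (\<Sum>j<k. \<Sum>b<B. zw t i j b \<omega>))\<^sup>2)"
    define s where "s = (\<lambda>\<omega>. \<Sum>j<K. (norm (xw t i j \<omega> - Zw t \<omega>))\<^sup>2)"
    define an where "an = (\<lambda>\<omega>. (norm (gradf i (Zw t \<omega>) + Cw t i \<omega>))\<^sup>2)"
    have ni: "integrable M n" unfolding n_def using nk_int[OF i] k by simp
    have si: "integrable M s" unfolding s_def using sumint' .
    have ai: "integrable M an" unfolding an_def using int_an[OF i] .
    have "(\<integral>\<omega>. (norm (xw t i k \<omega> - Zw t \<omega>))\<^sup>2 \<partial>M)
        \<le> (\<integral>\<omega>. 3 * \<beta>\<^sup>2 * ((1 / real B)\<^sup>2 * n \<omega> + (real K - 1) * L\<^sup>2 * s \<omega> + (real K - 1)\<^sup>2 * an \<omega>) \<partial>M)"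
      using int_dd[OF i] k ni si ai pw_bound[OF i k]
      by (intro integral_mono) (auto simp: n_def s_def an_def)
    also have "\<dots> = 3 * \<beta>\<^sup>2 * ((1 / real B)\<^sup>2 * (\<integral>\<omega>. n \<omega> \<partial>M) + (real K - 1) * L\<^sup>2 * (\<integral>\<omega>. s \<omega> \<partial>M) + (real K - 1)\<^sup>2 * (\<integral>\<omega>. an \<omega> \<partial>M))"
      using ni si ai by simp
    also have "(\<integral>\<omega>. s \<omega> \<partial>M) = S" unfolding s_def by (rule sumint)
    also have "(\<integral>\<omega>. an \<omega> \<partial>M) = A" unfolding an_def A_def ..
    also have "(1 / real B)\<^sup>2 * (\<integral>\<omega>. n \<omega> \<partial>M) \<le> (real K - 1) * \<sigma>\<^sup>2 / real B"
    proof -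
      have "(\<integral>\<omega>. n \<omega> \<partial>M) \<le> real k * real B * \<sigma>\<^sup>2" unfolding n_def using nk_bd[OF i] k by simp
      also have "\<dots> \<le> (real K - 1) * real B * \<sigma>\<^sup>2" using k by (intro mult_right_mono) auto
      finally have "(1 / real B)\<^sup>2 * (\<integral>\<omega>. n \<omega> \<partial>M) \<le> (1 / real B)\<^sup>2 * ((real K - 1) * real B * \<sigma>\<^sup>2)"
        by (intro mult_left_mono) auto
      also have "\<dots> = (real K - 1) * \<sigma>\<^sup>2 / real B" using Bp by (simp add: power2_eq_square field_simps)
      finally show ?thesis .
    qed
    finally show ?thesis unfolding T_def by (simp add: mult_left_mono)
  qed
  have "S \<le> real K * T"
    unfolding S_def using each sum_bounded_above[of "{..<K}" "\<lambda>k. \<integral>\<omega>. (norm (xw t i k \<omega> - Zw t \<omega>))\<^sup>2 \<partial>M" T]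
    by simp
  also have "real K * T = (3 * \<beta>\<^sup>2 * real K * (real K - 1) * L\<^sup>2) * S + 3 * \<beta>\<^sup>2 * real K * (real K - 1) * (\<sigma>\<^sup>2 / real B + (real K - 1) * A)"
    unfolding T_def using Bp by (simp add: field_simps power2_eq_square)
  finally have S1: "S \<le> (3 * \<beta>\<^sup>2 * real K * (real K - 1) * L\<^sup>2) * S + 3 * \<beta>\<^sup>2 * real K * (real K - 1) * (\<sigma>\<^sup>2 / real B + (real K - 1) * A)" .
  have c: "3 * \<beta>\<^sup>2 * real K * (real K - 1) * L\<^sup>2 \<le> 1 / 8" using beta_bound by (simp add: algebra_simps)
  have S0: "S \<ge> 0" unfolding S_def by (intro sum_nonneg integral_nonneg_AE) auto
  define cc where "cc = 3 * \<beta>\<^sup>2 * real K * (real K - 1) * L\<^sup>2"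
  define R where "R = 3 * \<beta>\<^sup>2 * real K * (real K - 1) * (\<sigma>\<^sup>2 / real B + (real K - 1) * A)"
  have S2: "S \<le> cc * S + R" using S1 unfolding cc_def R_def .
  have "cc * S \<le> 1 / 8 * S" using c S0 unfolding cc_def by (intro mult_right_mono) auto
  then have "S \<le> 8 / 7 * R" using S2 by linarith
  then show ?thesis unfolding R_def .
qed

end

context fcB
begin

lemma e_eq:
  "Dlw t i \<omega> - gradf i (Zw t \<omega>) - Cw t i \<omega> = (1 / (real K * real B)) *\<^sub>R (\<Sum>j<K. \<Sum>b<B. zw t i j b \<omega>)
     + (1 / real K) *\<^sub>R (\<Sum>j<K. (gradf i (xw t i j \<omega>) - gradf i (Zw t \<omega>)))"
  using delta_eq[of "Xw \<omega>" t i] by (simp add: Dlw_def Zw_def Cw_def zw_def xw_def)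

lemma SQ_e: "i < N \<Longrightarrow> SQ (\<lambda>\<omega>. Dlw t i \<omega> - gradf i (Zw t \<omega>) - Cw t i \<omega>)"
  by (intro SQ_diff SQ_Dlw SQ_gradf SQ_Zw SQ_Cw) auto

lemma client_e:
  fixes t i :: nat
  assumes i: "i < N"
  defines "A \<equiv> (\<integral>\<omega>. (norm (gradf i (Zw t \<omega>) + Cw t i \<omega>))\<^sup>2 \<partial>M)"
  shows "(\<integral>\<omega>. (norm (Dlw t i \<omega> - gradf i (Zw t \<omega>) - Cw t i \<omega>))\<^sup>2 \<partial>M)
     \<le> 2 * \<sigma>\<^sup>2 / (real K * real B) + 48 / 7 * L\<^sup>2 * \<beta>\<^sup>2 * (real K - 1) * (\<sigma>\<^sup>2 / real B + (real K - 1) * A)"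
proof -
  define S where "S = (\<Sum>k<K. \<integral>\<omega>. (norm (xw t i k \<omega> - Zw t \<omega>))\<^sup>2 \<partial>M)"
  define n where "n = (\<lambda>\<omega>. (norm (\<Sum>j<K. \<Sum>b<B. zw t i j b \<omega>))\<^sup>2)"
  define s where "s = (\<lambda>\<omega>. \<Sum>j<K. (norm (xw t i j \<omega> - Zw t \<omega>))\<^sup>2)"
  have Kp: "real K > 0" using K_pos by simp
  have Bp: "real B > 0" using B_pos by simp
  have ni: "integrable M n" unfolding n_def using nk_int[OF i] by simp
  have si: "integrable M s" unfolding s_def using int_dd[OF i] by (intro Bochner_Integration.integrable_sum) auto
  have sS: "(\<integral>\<omega>. s \<omega> \<partial>M) = S" unfolding s_def S_def using int_dd[OF i] by (intro Bochner_Integration.integral_sum) auto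
  have pw: "(norm (Dlw t i \<omega> - gradf i (Zw t \<omega>) - Cw t i \<omega>))\<^sup>2 \<le> 2 * (1 / (real K * real B))\<^sup>2 * n \<omega> + 2 * L\<^sup>2 / real K * s \<omega>" for \<omega>
  proof -
    define d where "d = (\<Sum>j<K. (gradf i (xw t i j \<omega>) - gradf i (Zw t \<omega>)))"
    have "(norm (Dlw t i \<omega> - gradf i (Zw t \<omega>) - Cw t i \<omega>))\<^sup>2
        \<le> 2 * (norm ((1 / (real K * real B)) *\<^sub>R (\<Sum>j<K. \<Sum>b<B. zw t i j b \<omega>)))\<^sup>2 + 2 * (norm ((1 / real K) *\<^sub>R d))\<^sup>2"
      unfolding e_eq d_def by (rule norm_add_sq)
    also have "(norm ((1 / (real K * real B)) *\<^sub>R (\<Sum>j<K. \<Sum>b<B. zw t i j b \<omega>)))\<^sup>2 = (1 / (real K * real B))\<^sup>2 * n \<omega>"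
      unfolding n_def using Kp Bp by (simp add: power_mult_distrib power_divide)
    also have "(norm ((1 / real K) *\<^sub>R d))\<^sup>2 \<le> L\<^sup>2 / real K * s \<omega>"
    proof -
      have "(norm d)\<^sup>2 \<le> real (card {..<K}) * (\<Sum>j<K. (norm (gradf i (xw t i j \<omega>) - gradf i (Zw t \<omega>)))\<^sup>2)"
        unfolding d_def by (rule norm_sum_sq)
      also have "\<dots> \<le> real K * (\<Sum>j<K. L\<^sup>2 * (norm (xw t i j \<omega> - Zw t \<omega>))\<^sup>2)"
      proof -
        have "(\<Sum>j<K. (norm (gradf i (xw t i j \<omega>) - gradf i (Zw t \<omega>)))\<^sup>2) \<le> (\<Sum>j<K. L\<^sup>2 * (norm (xw t i j \<omega> - Zw t \<omega>))\<^sup>2)"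
        proof (rule sum_mono)
          fix j
          have "norm (gradf i (xw t i j \<omega>) - gradf i (Zw t \<omega>)) \<le> L * norm (xw t i j \<omega> - Zw t \<omega>)"
            using A2_lip i by auto
          then have "(norm (gradf i (xw t i j \<omega>) - gradf i (Zw t \<omega>)))\<^sup>2 \<le> (L * norm (xw t i j \<omega> - Zw t \<omega>))\<^sup>2"
            by (intro power_mono) auto
          then show "(norm (gradf i (xw t i j \<omega>) - gradf i (Zw t \<omega>)))\<^sup>2 \<le> L\<^sup>2 * (norm (xw t i j \<omega> - Zw t \<omega>))\<^sup>2"
            by (simp add: power_mult_distrib)
        qed
        then show ?thesis by (simp add: mult_left_mono)
      qed
      also have "\<dots> = real K * L\<^sup>2 * s \<omega>" by (simp add: s_def sum_distrib_left mult.assoc)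
      finally have nd: "(norm d)\<^sup>2 \<le> real K * L\<^sup>2 * s \<omega>" .
      have "(norm ((1 / real K) *\<^sub>R d))\<^sup>2 = (norm d)\<^sup>2 / (real K)\<^sup>2"
        using Kp by (simp add: power_mult_distrib power_divide)
      also have "\<dots> \<le> real K * L\<^sup>2 * s \<omega> / (real K)\<^sup>2" using nd by (intro divide_right_mono) auto
      also have "\<dots> = L\<^sup>2 / real K * s \<omega>" using Kp by (simp add: power2_eq_square field_simps)
      finally show ?thesis .
    qed
    finally show ?thesis by (simp add: algebra_simps)
  qed
  have "(\<integral>\<omega>. (norm (Dlw t i \<omega> - gradf i (Zw t \<omega>) - Cw t i \<omega>))\<^sup>2 \<partial>M)
      \<le> (\<integral>\<omega>. 2 * (1 / (real K * real B))\<^sup>2 * n \<omega> + 2 * L\<^sup>2 / real K * s \<omega> \<partial>M)"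
    using SQ_int[OF SQ_e[OF i]] ni si pw by (intro integral_mono) auto
  also have "\<dots> = 2 * (1 / (real K * real B))\<^sup>2 * (\<integral>\<omega>. n \<omega> \<partial>M) + 2 * L\<^sup>2 / real K * S"
    using ni si sS by simp
  also have "2 * (1 / (real K * real B))\<^sup>2 * (\<integral>\<omega>. n \<omega> \<partial>M) \<le> 2 * \<sigma>\<^sup>2 / (real K * real B)"
  proof -
    have "(\<integral>\<omega>. n \<omega> \<partial>M) \<le> real K * real B * \<sigma>\<^sup>2" unfolding n_def using nk_bd[OF i] by simp
    then have "2 * (1 / (real K * real B))\<^sup>2 * (\<integral>\<omega>. n \<omega> \<partial>M) \<le> 2 * (1 / (real K * real B))\<^sup>2 * (real K * real B * \<sigma>\<^sup>2)"
      by (intro mult_left_mono) auto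
    also have "\<dots> = 2 * \<sigma>\<^sup>2 / (real K * real B)" using Kp Bp by (simp add: power2_eq_square field_simps)
    finally show ?thesis .
  qed
  also have "2 * L\<^sup>2 / real K * S \<le> 2 * L\<^sup>2 / real K * (8 / 7 * (3 * \<beta>\<^sup>2 * real K * (real K - 1) * (\<sigma>\<^sup>2 / real B + (real K - 1) * A)))"
    using client_S[OF i, of t] Kp unfolding S_def A_def by (intro mult_left_mono) auto
  also have "\<dots> = 48 / 7 * L\<^sup>2 * \<beta>\<^sup>2 * (real K - 1) * (\<sigma>\<^sup>2 / real B + (real K - 1) * A)"
    using Kp by (simp add: field_simps)
  finally show ?thesis by simp
qed

end

context fcB
begin

lemma SQ_gfbar: "SQ f \<Longrightarrow> SQ (\<lambda>\<omega>. gfbar (f \<omega>))"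
  unfolding gfbar_def by (intro SQ_scale SQ_sum SQ_gradf) auto

lemma SQ_eD: "SQ (\<lambda>\<omega>. Dw t \<omega> - gfbar (Zw t \<omega>))"
  by (intro SQ_diff SQ_Dw SQ_gfbar SQ_Zw)

lemma SQ_Et: "i < N \<Longrightarrow> SQ (\<lambda>\<omega>. gradf i (Zw t \<omega>) + Cw t i \<omega> - gfbar (Zw t \<omega>))"
  by (intro SQ_diff SQ_add SQ_gradf SQ_Zw SQ_Cw SQ_gfbar) auto

lemma eD_eq: "Dw t \<omega> - gfbar (Zw t \<omega>) = (1 / real N) *\<^sub>R (\<Sum>i<N. (Dlw t i \<omega> - gradf i (Zw t \<omega>) - Cw t i \<omega>))"
  using Dbar_eq[of "Xw \<omega>" t] by (simp add: Dw_def Dlw_def Zw_def Cw_def)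

lemma K_ineq1: "48 / 7 * (real K - 1) \<le> 6 * (real K)\<^sup>2"
proof -
  have "0 \<le> (real K - 1)\<^sup>2" by simp
  then have "real K - 1 \<le> (real K)\<^sup>2 / 2" by (simp add: power2_diff)
  then have "48 / 7 * (real K - 1) \<le> 48 / 7 * ((real K)\<^sup>2 / 2)" by simp
  also have "\<dots> \<le> 6 * (real K)\<^sup>2" by simp
  finally show ?thesis .
qed

lemma K_ineq2: "96 / 7 * (real K - 1)\<^sup>2 \<le> 24 * (real K)\<^sup>2"
proof -
  have "(real K - 1)\<^sup>2 \<le> (real K)\<^sup>2" using K_pos by (intro power_mono) auto
  moreover have "0 \<le> (real K)\<^sup>2" by simp
  ultimately show ?thesis by linarith
qed

lemma e_bound:
  fixes t :: nat
  defines "G \<equiv> (\<integral>\<omega>. (norm (gfbar (Zw t \<omega>)))\<^sup>2 \<partial>M)"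
    and "Et \<equiv> (1 / real N) * (\<Sum>i<N. \<integral>\<omega>. (norm (gradf i (Zw t \<omega>) + Cw t i \<omega> - gfbar (Zw t \<omega>)))\<^sup>2 \<partial>M)"
  shows "(\<integral>\<omega>. (norm (Dw t \<omega> - gfbar (Zw t \<omega>)))\<^sup>2 \<partial>M)
     \<le> 24 * \<beta>\<^sup>2 * (real K)\<^sup>2 * L\<^sup>2 * (G + Et) + 2 * \<sigma>\<^sup>2 / (real B * real K) + 6 * \<beta>\<^sup>2 * (real K)\<^sup>2 * L\<^sup>2 * \<sigma>\<^sup>2 / real B"
proof -
  define ei where "ei = (\<lambda>i \<omega>. Dlw t i \<omega> - gradf i (Zw t \<omega>) - Cw t i \<omega>)"
  define A where "A = (\<lambda>i. \<integral>\<omega>. (norm (gradf i (Zw t \<omega>) + Cw t i \<omega>))\<^sup>2 \<partial>M)"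
  define Ei where "Ei = (\<lambda>i. \<integral>\<omega>. (norm (gradf i (Zw t \<omega>) + Cw t i \<omega> - gfbar (Zw t \<omega>)))\<^sup>2 \<partial>M)"
  define c1 where "c1 = 48 / 7 * L\<^sup>2 * \<beta>\<^sup>2 * (real K - 1) * \<sigma>\<^sup>2 / real B"
  define c2 where "c2 = 48 / 7 * L\<^sup>2 * \<beta>\<^sup>2 * (real K - 1)\<^sup>2"
  have Np: "real N > 0" using N_pos by simp
  have Kp: "real K > 0" using K_pos by simp
  have Bp: "real B > 0" using B_pos by simp
  have K1: "real K - 1 \<ge> 0" using K_pos by simp
  have eii: "integrable M (\<lambda>\<omega>. (norm (ei i \<omega>))\<^sup>2)" if "i < N" for i
    unfolding ei_def using SQ_int[OF SQ_e[OF that]] .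
  have pw: "(norm (Dw t \<omega> - gfbar (Zw t \<omega>)))\<^sup>2 \<le> (1 / real N) * (\<Sum>i<N. (norm (ei i \<omega>))\<^sup>2)" for \<omega>
  proof -
    have "(norm (Dw t \<omega> - gfbar (Zw t \<omega>)))\<^sup>2 = (1 / real N)\<^sup>2 * (norm (\<Sum>i<N. ei i \<omega>))\<^sup>2"
      unfolding eD_eq ei_def using Np by (simp add: power_mult_distrib power_divide)
    also have "\<dots> \<le> (1 / real N)\<^sup>2 * (real (card {..<N}) * (\<Sum>i<N. (norm (ei i \<omega>))\<^sup>2))"
      by (intro mult_left_mono norm_sum_sq) auto
    also have "\<dots> = (1 / real N) * (\<Sum>i<N. (norm (ei i \<omega>))\<^sup>2)" using Np by (simp add: power2_eq_square)
    finally show ?thesis .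
  qed
  have "(\<integral>\<omega>. (norm (Dw t \<omega> - gfbar (Zw t \<omega>)))\<^sup>2 \<partial>M) \<le> (\<integral>\<omega>. (1 / real N) * (\<Sum>i<N. (norm (ei i \<omega>))\<^sup>2) \<partial>M)"
    using SQ_int[OF SQ_eD] eii pw by (intro integral_mono Bochner_Integration.integrable_mult_right Bochner_Integration.integrable_sum) auto
  also have "\<dots> = (1 / real N) * (\<Sum>i<N. \<integral>\<omega>. (norm (ei i \<omega>))\<^sup>2 \<partial>M)"
    using eii by (subst integral_mult_right_zero) (simp add: Bochner_Integration.integral_sum)
  also have "\<dots> \<le> (1 / real N) * (\<Sum>i<N. 2 * \<sigma>\<^sup>2 / (real K * real B) + c1 + c2 * A i)"
  proof -
    have "(\<Sum>i<N. \<integral>\<omega>. (norm (ei i \<omega>))\<^sup>2 \<partial>M) \<le> (\<Sum>i<N. 2 * \<sigma>\<^sup>2 / (real K * real B) + c1 + c2 * A i)"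
    proof (rule sum_mono)
      fix i assume "i \<in> {..<N}"
      then have i: "i < N" by simp
      have "(\<integral>\<omega>. (norm (ei i \<omega>))\<^sup>2 \<partial>M) \<le> 2 * \<sigma>\<^sup>2 / (real K * real B) + 48 / 7 * L\<^sup>2 * \<beta>\<^sup>2 * (real K - 1) * (\<sigma>\<^sup>2 / real B + (real K - 1) * A i)"
        unfolding ei_def A_def by (rule client_e[OF i])
      also have "48 / 7 * L\<^sup>2 * \<beta>\<^sup>2 * (real K - 1) * (\<sigma>\<^sup>2 / real B + (real K - 1) * A i) = c1 + c2 * A i"
        unfolding c1_def c2_def power2_eq_square using Bp by (simp add: field_simps)
      finally show "(\<integral>\<omega>. (norm (ei i \<omega>))\<^sup>2 \<partial>M) \<le> 2 * \<sigma>\<^sup>2 / (real K * real B) + c1 + c2 * A i" by simp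
    qed
    then show ?thesis using Np by (intro mult_left_mono) auto
  qed
  also have "\<dots> = 2 * \<sigma>\<^sup>2 / (real K * real B) + c1 + c2 * ((1 / real N) * (\<Sum>i<N. A i))"
    using Np by (simp add: sum.distrib sum_distrib_left[symmetric] field_simps)
  finally have C1: "(\<integral>\<omega>. (norm (Dw t \<omega> - gfbar (Zw t \<omega>)))\<^sup>2 \<partial>M) \<le> 2 * \<sigma>\<^sup>2 / (real K * real B) + c1 + c2 * ((1 / real N) * (\<Sum>i<N. A i))" .
  have "(1 / real N) * (\<Sum>i<N. A i) \<le> 2 * Et + 2 * G"
  proof -
    have "(\<Sum>i<N. A i) \<le> (\<Sum>i<N. 2 * Ei i + 2 * G)"
    proof (rule sum_mono)
      fix i assume "i \<in> {..<N}"
      then have i: "i < N" by simp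
      have "A i \<le> (\<integral>\<omega>. 2 * (norm (gradf i (Zw t \<omega>) + Cw t i \<omega> - gfbar (Zw t \<omega>)))\<^sup>2 + 2 * (norm (gfbar (Zw t \<omega>)))\<^sup>2 \<partial>M)"
        unfolding A_def
      proof (rule integral_mono)
        show "integrable M (\<lambda>\<omega>. (norm (gradf i (Zw t \<omega>) + Cw t i \<omega>))\<^sup>2)" using int_an[OF i] .
        show "integrable M (\<lambda>\<omega>. 2 * (norm (gradf i (Zw t \<omega>) + Cw t i \<omega> - gfbar (Zw t \<omega>)))\<^sup>2 + 2 * (norm (gfbar (Zw t \<omega>)))\<^sup>2)"
          using SQ_int[OF SQ_Et[OF i]] SQ_int[OF SQ_gfbar[OF SQ_Zw]] by auto
        fix \<omega>
        show "(norm (gradf i (Zw t \<omega>) + Cw t i \<omega>))\<^sup>2 \<le> 2 * (norm (gradf i (Zw t \<omega>) + Cw t i \<omega> - gfbar (Zw t \<omega>)))\<^sup>2 + 2 * (norm (gfbar (Zw t \<omega>)))\<^sup>2"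
          using norm_add_sq[of "gradf i (Zw t \<omega>) + Cw t i \<omega> - gfbar (Zw t \<omega>)" "gfbar (Zw t \<omega>)"] by simp
      qed
      also have "\<dots> = 2 * Ei i + 2 * G"
        using SQ_int[OF SQ_Et[OF i]] SQ_int[OF SQ_gfbar[OF SQ_Zw]] by (simp add: Ei_def G_def)
      finally show "A i \<le> 2 * Ei i + 2 * G" .
    qed
    also have "\<dots> = 2 * (\<Sum>i<N. Ei i) + real N * (2 * G)" by (simp add: sum.distrib sum_distrib_left)
    finally have "(1 / real N) * (\<Sum>i<N. A i) \<le> (1 / real N) * (2 * (\<Sum>i<N. Ei i) + real N * (2 * G))"
      using Np by (intro mult_left_mono) auto
    also have "\<dots> = 2 * Et + 2 * G" using Np by (simp add: Et_def Ei_def field_simps)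
    finally show ?thesis .
  qed
  then have "c2 * ((1 / real N) * (\<Sum>i<N. A i)) \<le> c2 * (2 * Et + 2 * G)"
    unfolding c2_def by (intro mult_left_mono) auto
  also have "c2 * (2 * Et + 2 * G) \<le> 24 * \<beta>\<^sup>2 * (real K)\<^sup>2 * L\<^sup>2 * (G + Et)"
  proof -
    have GE: "G + Et \<ge> 0" unfolding G_def Et_def using Np
      by (intro add_nonneg_nonneg mult_nonneg_nonneg sum_nonneg integral_nonneg_AE) auto
    have "c2 * (2 * Et + 2 * G) = (96 / 7 * (real K - 1)\<^sup>2) * (L\<^sup>2 * \<beta>\<^sup>2 * (G + Et))"
      unfolding c2_def by (simp add: algebra_simps)
    also have "\<dots> \<le> (24 * (real K)\<^sup>2) * (L\<^sup>2 * \<beta>\<^sup>2 * (G + Et))"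
      using K_ineq2 GE by (intro mult_right_mono) auto
    finally show ?thesis by (simp add: algebra_simps)
  qed
  finally have X: "c2 * ((1 / real N) * (\<Sum>i<N. A i)) \<le> 24 * \<beta>\<^sup>2 * (real K)\<^sup>2 * L\<^sup>2 * (G + Et)" .
  have Y: "c1 \<le> 6 * \<beta>\<^sup>2 * (real K)\<^sup>2 * L\<^sup>2 * \<sigma>\<^sup>2 / real B"
  proof -
    have "c1 = (48 / 7 * (real K - 1)) * (L\<^sup>2 * \<beta>\<^sup>2 * \<sigma>\<^sup>2 / real B)" unfolding c1_def by simp
    also have "\<dots> \<le> (6 * (real K)\<^sup>2) * (L\<^sup>2 * \<beta>\<^sup>2 * \<sigma>\<^sup>2 / real B)"
      using K_ineq1 Bp by (intro mult_right_mono) auto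
    finally show ?thesis by (simp add: algebra_simps)
  qed
  have Z: "2 * \<sigma>\<^sup>2 / (real K * real B) = 2 * \<sigma>\<^sup>2 / (real B * real K)" by (simp add: mult.commute)
  show ?thesis
    using C1 X Y Z by linarith
qed

end

lemma fin_comb: fixes X A1 A2 u a3 Bt W c E q :: real
  assumes "X \<le> A1 - A2 - u * a3 + Bt + W" "W \<le> c * a3 + c * E + q"
  shows "X \<le> A1 - A2 - (u - c) * a3 + Bt + c * E + q"
  using assms by (simp add: left_diff_distrib)

theorem lemma1:
  fixes M :: "'w measure" and D :: "nat \<Rightarrow> 'b measure"
    and X :: "nat \<Rightarrow> nat \<Rightarrow> nat \<Rightarrow> nat \<Rightarrow> 'w \<Rightarrow> 'b"
    and F :: "nat \<Rightarrow> 'a::euclidean_space \<Rightarrow> 'b \<Rightarrow> real"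
    and gF :: "nat \<Rightarrow> 'a \<Rightarrow> 'b \<Rightarrow> 'a"
    and fi :: "nat \<Rightarrow> 'a \<Rightarrow> real" and gradf :: "nat \<Rightarrow> 'a \<Rightarrow> 'a"
    and h :: "'a \<Rightarrow> real"
    and N K B :: nat and L \<rho> Bh \<sigma> \<alpha> \<beta> :: real
    and z0 :: 'a and c0 :: "nat \<Rightarrow> 'a" and t :: nat
  defines "gradfbar \<equiv> \<lambda>x. (1 / real N) *\<^sub>R (\<Sum>i<N. gradf i x)"
    and "\<phi> \<equiv> \<lambda>x. (1 / real N) * (\<Sum>i<N. fi i x) + h x"
    and "zz \<equiv> \<lambda>s \<omega>. fst (fedcanon gF B \<alpha> \<beta> K N h z0 c0 (\<lambda>s i k b. X s i k b \<omega>) s)"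
    and "cc \<equiv> \<lambda>s \<omega>. snd (fedcanon gF B \<alpha> \<beta> K N h z0 c0 (\<lambda>s i k b. X s i k b \<omega>) s)"
    and "Dbar \<equiv> \<lambda>s \<omega>. fc_Dbar gF B \<beta> K N (fedcanon gF B \<alpha> \<beta> K N h z0 c0 (\<lambda>s i k b. X s i k b \<omega>) s)
                         (\<lambda>i k b. X s i k b \<omega>)"
    and "\<delta> \<equiv> 1 / (1 - \<alpha> * \<rho>)\<^sup>2"
  assumes N_pos: "N > 0" and K_pos: "K > 0" and B_pos: "B > 0"
    and M_prob: "prob_space M"
    and D_prob: "\<forall>i<N. prob_space (D i)"
    and X_indep: "prob_space.indep_vars M (\<lambda>(s, i, k, b). D i) (\<lambda>(s, i, k, b). X s i k b)
                    {(s, i, k, b). i < N \<and> k < K \<and> b < B}"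
    and X_distr: "\<forall>s i k b. i < N \<longrightarrow> k < K \<longrightarrow> b < B \<longrightarrow> distr M (D i) (X s i k b) = D i"
    and f_expect: "\<forall>i<N. \<forall>x. integrable (D i) (F i x) \<and> fi i x = integral\<^sup>L (D i) (F i x)"
    and F_grad: "\<forall>i<N. \<forall>\<xi>\<in>space (D i). \<forall>x.
                   ((\<lambda>y. F i y \<xi>) has_derivative (\<lambda>v. gF i x \<xi> \<bullet> v)) (at x)"
    and f_grad: "\<forall>i<N. \<forall>x. (fi i has_derivative (\<lambda>v. gradf i x \<bullet> v)) (at x)"
    and A1: "bdd_below (range \<phi>)"
    and A2_L: "L > 0"
    and A2_upper: "\<forall>i<N. \<forall>x y. fi i x - fi i y - gradf i y \<bullet> (x - y) \<le> L / 2 * (norm (x - y))\<^sup>2"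
    and A2_lip: "\<forall>i<N. \<forall>x y. norm (gradf i x - gradf i y) \<le> L * norm (x - y)"
    and A3_rho: "\<rho> \<ge> 0"
    and A3_wconvex: "convex_on UNIV (\<lambda>x. h x + \<rho> / 2 * (norm x)\<^sup>2)"
    and A3_closed: "closed {p. h (fst p) \<le> snd p}"
    and A3_subgrad: "\<forall>z. \<forall>v\<in>frechet_subdiff h z. (norm v)\<^sup>2 \<le> Bh"
    and A4_meas: "\<forall>i<N. (\<lambda>p. gF i (fst p) (snd p)) \<in> borel_measurable (borel \<Otimes>\<^sub>M D i)"
    and A4_unbiased: "\<forall>i<N. \<forall>x. integrable (D i) (gF i x) \<and> integral\<^sup>L (D i) (gF i x) = gradf i x"
    and A4_var: "\<forall>i<N. \<forall>x. integrable (D i) (\<lambda>\<xi>. (norm (gF i x \<xi> - gradf i x))\<^sup>2)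
                   \<and> integral\<^sup>L (D i) (\<lambda>\<xi>. (norm (gF i x \<xi> - gradf i x))\<^sup>2) \<le> \<sigma>\<^sup>2"
    and c0_sum: "(\<Sum>i<N. c0 i) = 0"
    and alpha_pos: "\<alpha> > 0" and alpha_rho: "\<alpha> * \<rho> < 1"
    and beta_pos: "\<beta> > 0"
    and beta_bound: "24 * real K * (real K - 1) * L\<^sup>2 * \<beta>\<^sup>2 \<le> 1"
  shows "integral\<^sup>L M (\<lambda>\<omega>. \<phi> (zz (Suc t) \<omega>) - \<phi> (zz t \<omega>))
   \<le> - (\<alpha> - 2 * (\<rho> + L) * \<alpha>\<^sup>2) / 4 * integral\<^sup>L M (\<lambda>\<omega>. (norm (Gmap \<alpha> h (zz t \<omega>) (Dbar t \<omega>)))\<^sup>2)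
      - \<alpha> / 8 * integral\<^sup>L M (\<lambda>\<omega>. (norm (Gmap \<alpha> h (zz t \<omega>) (gradfbar (zz t \<omega>))))\<^sup>2)
      - (\<alpha> / 16 - 12 * (2 + \<delta>) * \<alpha> * \<beta>\<^sup>2 * (real K)\<^sup>2 * L\<^sup>2)
          * integral\<^sup>L M (\<lambda>\<omega>. (norm (gradfbar (zz t \<omega>)))\<^sup>2)
      + \<alpha> * Bh / 8
      + 12 * (2 + \<delta>) * \<alpha> * \<beta>\<^sup>2 * (real K)\<^sup>2 * L\<^sup>2 * ((1 / real N) * (\<Sum>i<N. integral\<^sup>L M
            (\<lambda>\<omega>. (norm (gradf i (zz t \<omega>) + cc t \<omega> i - gradfbar (zz t \<omega>)))\<^sup>2)))
      + \<alpha> * (2 + \<delta>) * (1 + 3 * \<beta>\<^sup>2 * (real K)^3 * L\<^sup>2) * \<sigma>\<^sup>2 / (real B * real K)"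
proof -
  interpret fcB h \<rho> \<alpha> Bh M D X gF gradf N K B L \<sigma> \<beta> z0 c0
    by (intro fcB.intro proxA.intro fcB_axioms.intro; fact)
  have zzZ: "zz = Zw" by (simp add: fun_eq_iff zz_def Zw_def zf_def fed_def Xw_def)
  have ccC: "\<And>s \<omega> i. cc s \<omega> i = Cw s i \<omega>" by (simp add: cc_def Cw_def cf_def fed_def Xw_def)
  have DD: "Dbar = Dw" by (simp add: fun_eq_iff Dbar_def Dw_def fed_def Xw_def)
  have gg: "gradfbar = gfbar" by (simp add: fun_eq_iff gradfbar_def gfbar_def)
  have Np: "real N > 0" using N_pos by simp
  have Kp: "real K > 0" using K_pos by simp
  have Bp: "real B > 0" using B_pos by simp
  define f where "f = (\<lambda>x. (1 / real N) * (\<Sum>i<N. fi i x))"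
  have phi_eq: "\<And>x. \<phi> x = f x + h x" by (simp add: \<phi>_def f_def)
  have fup: "f x \<le> f z + gfbar z \<bullet> (x - z) + L / 2 * (norm (x - z))\<^sup>2" for x z
  proof -
    have "(\<Sum>i<N. fi i x - fi i z - gradf i z \<bullet> (x - z)) \<le> real (card {..<N}) * (L / 2 * (norm (x - z))\<^sup>2)"
      using A2_upper by (intro sum_bounded_above) auto
    then have "(\<Sum>i<N. fi i x) - (\<Sum>i<N. fi i z) - (\<Sum>i<N. gradf i z) \<bullet> (x - z) \<le> real N * (L / 2 * (norm (x - z))\<^sup>2)"
      by (simp add: sum_subtractf inner_sum_left)
    then have "(1 / real N) * ((\<Sum>i<N. fi i x) - (\<Sum>i<N. fi i z) - (\<Sum>i<N. gradf i z) \<bullet> (x - z)) \<le> (1 / real N) * (real N * (L / 2 * (norm (x - z))\<^sup>2))"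
      using Np by (intro mult_left_mono) auto
    moreover have "(1 / real N) * (real N * (L / 2 * (norm (x - z))\<^sup>2)) = L / 2 * (norm (x - z))\<^sup>2" using Np by simp
    moreover have "gfbar z \<bullet> (x - z) = (1 / real N) * ((\<Sum>i<N. gradf i z) \<bullet> (x - z))" by (simp add: gfbar_def)
    moreover have "(1 / real N) * ((\<Sum>i<N. fi i x) - (\<Sum>i<N. fi i z) - (\<Sum>i<N. gradf i z) \<bullet> (x - z))
        = f x - f z - (1 / real N) * ((\<Sum>i<N. gradf i z) \<bullet> (x - z))" by (simp add: f_def right_diff_distrib)
    ultimately show ?thesis by linarith
  qed
  have f_cont: "continuous_on UNIV f"
  proof -
    have "continuous_on UNIV (fi i)" if "i < N" for i
    proof (rule continuous_at_imp_continuous_on, intro ballI)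
      fix x :: 'a
      show "isCont (fi i) x" using f_grad that by (blast intro: has_derivative_continuous)
    qed
    then show ?thesis unfolding f_def by (intro continuous_intros) auto
  qed
  have phi_cont: "continuous_on UNIV \<phi>"
    unfolding phi_eq[abs_def] by (intro continuous_intros f_cont h_cont)
  define R where "R = (\<lambda>s \<omega>. - (\<alpha> - 2 * (\<rho> + L) * \<alpha>\<^sup>2) / 4 * (norm (Gmap \<alpha> h (Zw s \<omega>) (Dw s \<omega>)))\<^sup>2
       - \<alpha> / 8 * (norm (Gmap \<alpha> h (Zw s \<omega>) (gfbar (Zw s \<omega>))))\<^sup>2 - \<alpha> / 16 * (norm (gfbar (Zw s \<omega>)))\<^sup>2 + \<alpha> * Bh / 8
       + \<alpha> * (2 + \<delta>) / 2 * (norm (Dw s \<omega> - gfbar (Zw s \<omega>)))\<^sup>2)"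
  have Zsuc: "Zw (Suc s) \<omega> = prox \<alpha> h (Zw s \<omega> - \<alpha> *\<^sub>R Dw s \<omega>)" for s \<omega>
    by (simp add: Zw_def Dw_def zf_def fed_def Let_def)
  have pw: "\<phi> (Zw (Suc s) \<omega>) - \<phi> (Zw s \<omega>) \<le> R s \<omega>" for s \<omega>
    unfolding Zsuc phi_eq R_def \<delta>_def using descent[OF fup, of "Zw s \<omega>" "Dw s \<omega>"] A2_L by auto
  have SQG: "SQ (\<lambda>\<omega>. Gmap \<alpha> h (Zw s \<omega>) (u \<omega>))" if "SQ u" for s u
    unfolding Gmap_def using that by (intro SQ_scale SQ_diff SQ_Zw SQ_prox)
  have Rint: "integrable M (R s)" for s
    unfolding R_def
    using SQ_int[OF SQG[OF SQ_Dw]] SQ_int[OF SQG[OF SQ_gfbar[OF SQ_Zw]]] SQ_int[OF SQ_gfbar[OF SQ_Zw]] SQ_int[OF SQ_eD]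
    by (intro Bochner_Integration.integrable_add Bochner_Integration.integrable_diff Bochner_Integration.integrable_mult_right) auto
  have phim: "(\<lambda>\<omega>. \<phi> (Zw s \<omega>)) \<in> borel_measurable M" for s
    using borel_measurable_continuous_on[OF phi_cont SQ_meas[OF SQ_Zw]] .
  obtain m where m: "\<And>x. m \<le> \<phi> x" using A1 unfolding bdd_below_def by auto
  have phiint: "integrable M (\<lambda>\<omega>. \<phi> (Zw s \<omega>))" for s
  proof (induction s)
    case 0 then show ?case by (simp add: Zw_def zf_def fed_def)
  next
    case (Suc s)
    show ?case
    proof (rule Bochner_Integration.integrable_bound[where f="\<lambda>\<omega>. \<bar>m\<bar> + \<bar>\<phi> (Zw s \<omega>)\<bar> + \<bar>R s \<omega>\<bar>"])
      show "integrable M (\<lambda>\<omega>. \<bar>m\<bar> + \<bar>\<phi> (Zw s \<omega>)\<bar> + \<bar>R s \<omega>\<bar>)"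
        using Suc Rint by (intro Bochner_Integration.integrable_add integrable_abs) auto
      show "(\<lambda>\<omega>. \<phi> (Zw (Suc s) \<omega>)) \<in> borel_measurable M" by (rule phim)
      show "AE \<omega> in M. norm (\<phi> (Zw (Suc s) \<omega>)) \<le> norm (\<bar>m\<bar> + \<bar>\<phi> (Zw s \<omega>)\<bar> + \<bar>R s \<omega>\<bar>)"
      proof (rule AE_I2)
        fix \<omega>
        have "m \<le> \<phi> (Zw (Suc s) \<omega>)" by (rule m)
        moreover have "\<phi> (Zw (Suc s) \<omega>) \<le> \<phi> (Zw s \<omega>) + R s \<omega>" using pw[of s \<omega>] by simp
        ultimately show "norm (\<phi> (Zw (Suc s) \<omega>)) \<le> norm (\<bar>m\<bar> + \<bar>\<phi> (Zw s \<omega>)\<bar> + \<bar>R s \<omega>\<bar>)" by simp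
      qed
    qed
  qed
  define a1 where "a1 = (\<integral>\<omega>. (norm (Gmap \<alpha> h (Zw t \<omega>) (Dw t \<omega>)))\<^sup>2 \<partial>M)"
  define a2 where "a2 = (\<integral>\<omega>. (norm (Gmap \<alpha> h (Zw t \<omega>) (gfbar (Zw t \<omega>))))\<^sup>2 \<partial>M)"
  define a3 where "a3 = (\<integral>\<omega>. (norm (gfbar (Zw t \<omega>)))\<^sup>2 \<partial>M)"
  define Ee where "Ee = (\<integral>\<omega>. (norm (Dw t \<omega> - gfbar (Zw t \<omega>)))\<^sup>2 \<partial>M)"
  define Et where "Et = (1 / real N) * (\<Sum>i<N. \<integral>\<omega>. (norm (gradf i (Zw t \<omega>) + Cw t i \<omega> - gfbar (Zw t \<omega>)))\<^sup>2 \<partial>M)"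
  have "(\<integral>\<omega>. \<phi> (Zw (Suc t) \<omega>) - \<phi> (Zw t \<omega>) \<partial>M) \<le> (\<integral>\<omega>. R t \<omega> \<partial>M)"
    using phiint Rint pw by (intro integral_mono Bochner_Integration.integrable_diff) auto
  also have "(\<integral>\<omega>. R t \<omega> \<partial>M) = - (\<alpha> - 2 * (\<rho> + L) * \<alpha>\<^sup>2) / 4 * a1 - \<alpha> / 8 * a2 - \<alpha> / 16 * a3 + \<alpha> * Bh / 8 + \<alpha> * (2 + \<delta>) / 2 * Ee"
    unfolding R_def a1_def a2_def a3_def Ee_def
    using SQ_int[OF SQG[OF SQ_Dw]] SQ_int[OF SQG[OF SQ_gfbar[OF SQ_Zw]]] SQ_int[OF SQ_gfbar[OF SQ_Zw]] SQ_int[OF SQ_eD]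
    by (simp add: Bochner_Integration.integral_add Bochner_Integration.integral_diff Bochner_Integration.integrable_add Bochner_Integration.integrable_diff P.prob_space)
  finally have L1: "(\<integral>\<omega>. \<phi> (Zw (Suc t) \<omega>) - \<phi> (Zw t \<omega>) \<partial>M) \<le> - (\<alpha> - 2 * (\<rho> + L) * \<alpha>\<^sup>2) / 4 * a1 - \<alpha> / 8 * a2 - \<alpha> / 16 * a3 + \<alpha> * Bh / 8 + \<alpha> * (2 + \<delta>) / 2 * Ee" .
  have EB: "Ee \<le> 24 * \<beta>\<^sup>2 * (real K)\<^sup>2 * L\<^sup>2 * (a3 + Et) + 2 * \<sigma>\<^sup>2 / (real B * real K) + 6 * \<beta>\<^sup>2 * (real K)\<^sup>2 * L\<^sup>2 * \<sigma>\<^sup>2 / real B"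
    unfolding Ee_def a3_def Et_def by (rule e_bound)
  have dpos: "\<delta> \<ge> 0" by (simp add: \<delta>_def)
  have "\<alpha> * (2 + \<delta>) / 2 * Ee \<le> \<alpha> * (2 + \<delta>) / 2 * (24 * \<beta>\<^sup>2 * (real K)\<^sup>2 * L\<^sup>2 * (a3 + Et) + 2 * \<sigma>\<^sup>2 / (real B * real K) + 6 * \<beta>\<^sup>2 * (real K)\<^sup>2 * L\<^sup>2 * \<sigma>\<^sup>2 / real B)"
    using EB alpha_pos dpos by (intro mult_left_mono) auto
  also have "\<dots> = 12 * (2 + \<delta>) * \<alpha> * \<beta>\<^sup>2 * (real K)\<^sup>2 * L\<^sup>2 * a3 + 12 * (2 + \<delta>) * \<alpha> * \<beta>\<^sup>2 * (real K)\<^sup>2 * L\<^sup>2 * Et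
      + \<alpha> * (2 + \<delta>) * (1 + 3 * \<beta>\<^sup>2 * (real K)^3 * L\<^sup>2) * \<sigma>\<^sup>2 / (real B * real K)"
    using Bp Kp by (simp add: field_simps power2_eq_square power3_eq_cube)
  finally have L2: "\<alpha> * (2 + \<delta>) / 2 * Ee \<le> 12 * (2 + \<delta>) * \<alpha> * \<beta>\<^sup>2 * (real K)\<^sup>2 * L\<^sup>2 * a3 + 12 * (2 + \<delta>) * \<alpha> * \<beta>\<^sup>2 * (real K)\<^sup>2 * L\<^sup>2 * Et
      + \<alpha> * (2 + \<delta>) * (1 + 3 * \<beta>\<^sup>2 * (real K)^3 * L\<^sup>2) * \<sigma>\<^sup>2 / (real B * real K)" .
  have "(\<integral>\<omega>. \<phi> (Zw (Suc t) \<omega>) - \<phi> (Zw t \<omega>) \<partial>M) \<le> - (\<alpha> - 2 * (\<rho> + L) * \<alpha>\<^sup>2) / 4 * a1 - \<alpha> / 8 * a2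
      - (\<alpha> / 16 - 12 * (2 + \<delta>) * \<alpha> * \<beta>\<^sup>2 * (real K)\<^sup>2 * L\<^sup>2) * a3 + \<alpha> * Bh / 8
      + 12 * (2 + \<delta>) * \<alpha> * \<beta>\<^sup>2 * (real K)\<^sup>2 * L\<^sup>2 * Et
      + \<alpha> * (2 + \<delta>) * (1 + 3 * \<beta>\<^sup>2 * (real K)^3 * L\<^sup>2) * \<sigma>\<^sup>2 / (real B * real K)"
    by (rule fin_comb[OF L1 L2])
  then show ?thesis
    unfolding zzZ DD gg a1_def a2_def a3_def Et_def ccC .
qed

end
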